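(* Let $\Gamma$ be a finitely generated group and $\Gamma_0$ a subgroup of finite index in $\Gamma$. Then $\rho(\Gamma_0)=\rho(\Gamma)$.
   Context: For a group $\Gamma$, $r_n(\Gamma)$ is the number of isomorphism classes of $n$-dimensional irreducible complex representations, $R_n(\Gamma)=\sum_{i=1}^n r_i(\Gamma)$, and $\rho(\Gamma)=\limsup_{n\to\infty}\frac{\log R_n(\Gamma)}{\log n}$, with $\rho(\Gamma)=\infty$ if some $R_n(\Gamma)$ is infinite or $R_n(\Gamma)$ is not polynomially bounded. *)

theory Defs
  imports "Jordan_Normal_Form.Matrix" "HOL-Algebra.Coset" "HOL-Algebra.Generated_Groups"
    "HOL-Library.Extended_Nat" "HOL-Library.Extended_Real" "HOL-Library.Liminf_Limsup"
begin

definition fin_gen_group :: "('g, 'b) monoid_scheme \<Rightarrow> bool" where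
  "fin_gen_group G \<longleftrightarrow> (\<exists>S. finite S \<and> S \<subseteq> carrier G \<and> generate G S = carrier G)"

text \<open>An n-dimensional complex representation: a monoid homomorphism from G into
  the n x n complex matrices (images are then automatically invertible).\<close>
definition is_rep :: "('g, 'b) monoid_scheme \<Rightarrow> nat \<Rightarrow> ('g \<Rightarrow> complex mat) \<Rightarrow> bool" where
  "is_rep G n \<rho> \<longleftrightarrow>
     (\<forall>g\<in>carrier G. \<rho> g \<in> carrier_mat n n) \<and>
     (\<forall>g\<in>carrier G. \<forall>h\<in>carrier G. \<rho> (g \<otimes>\<^bsub>G\<^esub> h) = \<rho> g * \<rho> h) \<and>
     \<rho> \<one>\<^bsub>G\<^esub> = 1\<^sub>m n"

definition is_subspace :: "nat \<Rightarrow> complex vec set \<Rightarrow> bool" where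
  "is_subspace n W \<longleftrightarrow> W \<subseteq> carrier_vec n \<and> 0\<^sub>v n \<in> W \<and>
     (\<forall>v\<in>W. \<forall>w\<in>W. v + w \<in> W) \<and> (\<forall>c::complex. \<forall>v\<in>W. c \<cdot>\<^sub>v v \<in> W)"

definition is_irrep :: "('g, 'b) monoid_scheme \<Rightarrow> nat \<Rightarrow> ('g \<Rightarrow> complex mat) \<Rightarrow> bool" where
  "is_irrep G n \<rho> \<longleftrightarrow> is_rep G n \<rho> \<and> n > 0 \<and>
     \<not> (\<exists>W. is_subspace n W \<and> W \<noteq> {0\<^sub>v n} \<and> W \<noteq> carrier_vec n \<and>
            (\<forall>g\<in>carrier G. \<forall>w\<in>W. \<rho> g *\<^sub>v w \<in> W))"

definition rep_iso :: "('g, 'b) monoid_scheme \<Rightarrow> nat \<Rightarrow> (('g \<Rightarrow> complex mat) \<times> ('g \<Rightarrow> complex mat)) set" where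
  "rep_iso G n = {(\<rho>, \<sigma>). \<exists>P\<in>carrier_mat n n. invertible_mat P \<and>
                      (\<forall>g\<in>carrier G. P * \<rho> g = \<sigma> g * P)}"

definition r_irr :: "('g, 'b) monoid_scheme \<Rightarrow> nat \<Rightarrow> enat" where
  "r_irr G n = (let C = {\<rho>. is_irrep G n \<rho>} // rep_iso G n in
                  if finite C then enat (card C) else \<infinity>)"

definition R_irr :: "('g, 'b) monoid_scheme \<Rightarrow> nat \<Rightarrow> enat" where
  "R_irr G n = (\<Sum>i\<in>{1..n}. r_irr G i)"

definition rep_growth :: "('g, 'b) monoid_scheme \<Rightarrow> ereal" where
  "rep_growth G = (if \<exists>n. R_irr G n = \<infinity> then \<infinity>
     else limsup (\<lambda>n. ereal (ln (real (the_enat (R_irr G n))) / ln (real n))))"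

end

theory Submission
  imports Defs "Jordan_Normal_Form.Determinant"
begin

definition inj_mat :: "complex mat \<Rightarrow> bool" where
  "inj_mat A \<longleftrightarrow> (\<forall>v\<in>carrier_vec (dim_col A). A *\<^sub>v v = 0\<^sub>v (dim_row A) \<longrightarrow> v = 0\<^sub>v (dim_col A))"

definition img :: "complex mat \<Rightarrow> complex vec set" where
  "img A = (\<lambda>v. A *\<^sub>v v) ` carrier_vec (dim_col A)"

lemma mat_mult_zero_vec[simp]: "A \<in> carrier_mat nr nc \<Longrightarrow> (A :: complex mat) *\<^sub>v 0\<^sub>v nc = 0\<^sub>v nr"
  by (intro eq_vecI) auto

lemma inj_sq_inv:
  assumes A: "A \<in> carrier_mat n n" and inj: "inj_mat A"
  shows "\<exists>B\<in>carrier_mat n n. A * B = 1\<^sub>m n \<and> B * A = 1\<^sub>m n"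
proof -
  have "det A \<noteq> 0"
    using det_0_iff_vec_prod_zero[OF A] inj A unfolding inj_mat_def by auto
  from det_non_zero_imp_unit[OF A this, of undefined]
  show ?thesis unfolding Units_def ring_mat_def by auto
qed

lemma inj_sq_invertible:
  assumes A: "A \<in> carrier_mat n n" and inj: "inj_mat A"
  shows "invertible_mat A"
proof -
  obtain B where B: "B\<in>carrier_mat n n" "A * B = 1\<^sub>m n" "B * A = 1\<^sub>m n"
    using inj_sq_inv[OF A inj] by auto
  then show ?thesis using A unfolding invertible_mat_def inverts_mat_def by auto
qed

lemma inj_dim:
  assumes A: "A \<in> carrier_mat N d" and inj: "inj_mat A"
  shows "d \<le> N"
proof (rule ccontr)
  assume "\<not> d \<le> N"
  hence Nd: "N < d" by simp
  define A' where "A' = mat d d (\<lambda>(i,j). if i < N then A $$ (i,j) else (0::complex))"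
  have A'c: "A' \<in> carrier_mat d d" unfolding A'_def by simp
  have "inj_mat A'"
    unfolding inj_mat_def
  proof (intro ballI impI)
    fix v :: "complex vec" assume v: "v \<in> carrier_vec (dim_col A')" and z: "A' *\<^sub>v v = 0\<^sub>v (dim_row A')"
    have vc: "v \<in> carrier_vec d" using v A'c by simp
    have "A *\<^sub>v v = 0\<^sub>v N"
    proof (rule eq_vecI)
      fix i assume "i < dim_vec (0\<^sub>v N :: complex vec)"
      hence i: "i < N" by simp
      have "(A' *\<^sub>v v) $ i = 0" using z i Nd A'c by simp
      moreover have "(A' *\<^sub>v v) $ i = (A *\<^sub>v v) $ i"
        using i Nd A vc unfolding A'_def by (auto simp: row_def scalar_prod_def)
      ultimately show "(A *\<^sub>v v) $ i = 0\<^sub>v N $ i" using i by simp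
    qed (use A in simp)
    hence "v = 0\<^sub>v d" using inj A vc unfolding inj_mat_def by auto
    then show "v = 0\<^sub>v (dim_col A')" using A'c by simp
  qed
  then obtain B where B: "B\<in>carrier_mat d d" "A' * B = 1\<^sub>m d"
    using inj_sq_inv[OF A'c] by auto
  have nd: "\<not> (d - Suc 0 < N)" using Nd by simp
  have "(A' * B) $$ (d - 1, d - 1) = 0"
    using Nd nd B(1) A'c unfolding A'_def by (auto simp: row_def scalar_prod_def)
  moreover have "(1\<^sub>m d :: complex mat) $$ (d - 1, d - 1) = 1" using Nd by simp
  ultimately show False using B(2) by simp
qed

lemma surj_right_inv:
  assumes A: "A \<in> carrier_mat m n" and s: "carrier_vec m \<subseteq> img A"
  shows "\<exists>X\<in>carrier_mat n m. A * X = 1\<^sub>m m"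
proof -
  have ex: "\<exists>v. v \<in> carrier_vec n \<and> A *\<^sub>v v = unit_vec m j" for j
  proof -
    have "unit_vec m j \<in> (\<lambda>v. A *\<^sub>v v) ` carrier_vec (dim_col A)"
      using s unit_vec_carrier unfolding img_def by blast
    then show ?thesis using A by auto
  qed
  define X where "X = mat n m (\<lambda>(i,j). (SOME v. v \<in> carrier_vec n \<and> A *\<^sub>v v = unit_vec m j) $ i)"
  have colX: "col X j = (SOME v. v \<in> carrier_vec n \<and> A *\<^sub>v v = unit_vec m j)" if "j < m" for j
  proof -
    have "(SOME v. v \<in> carrier_vec n \<and> A *\<^sub>v v = unit_vec m j) \<in> carrier_vec n"
      using someI_ex[OF ex[of j]] by auto
    then show ?thesis using that unfolding X_def by (auto simp: col_mat)
  qed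
  have "A * X = 1\<^sub>m m"
  proof (rule eq_matI)
    fix i j assume i: "i < dim_row (1\<^sub>m m :: complex mat)" and j: "j < dim_col (1\<^sub>m m :: complex mat)"
    have "(A * X) $$ (i, j) = row A i \<bullet> col X j" using i j A unfolding X_def by simp
    also have "\<dots> = (A *\<^sub>v col X j) $ i" using i A by simp
    also have "\<dots> = unit_vec m j $ i" using colX[of j] j someI_ex[OF ex[of j]] by simp
    finally show "(A * X) $$ (i, j) = 1\<^sub>m m $$ (i, j)" using i j by simp
  qed (use A in \<open>auto simp: X_def\<close>)
  then show ?thesis unfolding X_def by auto
qed

lemma surj_dim:
  assumes A: "A \<in> carrier_mat m n" and s: "carrier_vec m \<subseteq> img A"
  shows "m \<le> n"
proof -
  obtain X where X: "X\<in>carrier_mat n m" "A * X = 1\<^sub>m m" using surj_right_inv[OF A s] by auto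
  have "inj_mat X" unfolding inj_mat_def
  proof (intro ballI impI)
    fix v assume v: "v \<in> carrier_vec (dim_col X)" and z: "X *\<^sub>v v = 0\<^sub>v (dim_row X)"
    have vc: "v \<in> carrier_vec m" using v X by simp
    have "v = (A * X) *\<^sub>v v" unfolding X(2) using vc by simp
    also have "\<dots> = A *\<^sub>v (X *\<^sub>v v)" using X(1) A vc by simp
    also have "\<dots> = 0\<^sub>v m" using z X A by simp
    finally show "v = 0\<^sub>v (dim_col X)" using X by simp
  qed
  from inj_dim[OF X(1) this] show ?thesis .
qed

lemma zero_mat_mult_vec[simp]: "v \<in> carrier_vec nc \<Longrightarrow> (0\<^sub>m nr nc :: complex mat) *\<^sub>v v = 0\<^sub>v nr"
  by (intro eq_vecI) (auto simp: row_def scalar_prod_def)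

lemma nonzero_mat_vec:
  fixes A :: "complex mat"
  assumes A: "A \<in> carrier_mat nr nc" and nz: "A \<noteq> 0\<^sub>m nr nc"
  shows "\<exists>v\<in>carrier_vec nc. A *\<^sub>v v \<noteq> 0\<^sub>v nr"
proof -
  obtain i j where ij: "i < nr" "j < nc" "A $$ (i,j) \<noteq> 0"
    using nz A by (metis carrier_matD eq_matI index_zero_mat(1) index_zero_mat(2) index_zero_mat(3))
  have "(A *\<^sub>v unit_vec nc j) $ i = A $$ (i,j)" using ij A by simp
  then show ?thesis using ij by (intro bexI[of _ "unit_vec nc j"]) auto
qed

lemma inj_mult_nonzero:
  assumes A: "A \<in> carrier_mat N d" and C: "C \<in> carrier_mat d e" and inj: "inj_mat A"
    and nz: "C \<noteq> 0\<^sub>m d e"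
  shows "A * C \<noteq> 0\<^sub>m N e"
proof
  assume z: "A * C = 0\<^sub>m N e"
  obtain v where v: "v \<in> carrier_vec e" "C *\<^sub>v v \<noteq> 0\<^sub>v d" using nonzero_mat_vec[OF C nz] by auto
  have "A *\<^sub>v (C *\<^sub>v v) = (A * C) *\<^sub>v v" using A C v by simp
  also have "\<dots> = 0\<^sub>v N" using z v by simp
  finally have "C *\<^sub>v v = 0\<^sub>v d" using inj A C v unfolding inj_mat_def by auto
  with v show False by simp
qed

lemma inj_mult:
  assumes A: "A \<in> carrier_mat N d" and C: "C \<in> carrier_mat d e" and iA: "inj_mat A" and iC: "inj_mat C"
  shows "inj_mat (A * C)"
  unfolding inj_mat_def
proof (intro ballI impI)
  fix v assume v: "v \<in> carrier_vec (dim_col (A * C))" and z: "A * C *\<^sub>v v = 0\<^sub>v (dim_row (A * C))"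
  have vc: "v \<in> carrier_vec e" using v C by simp
  have "A *\<^sub>v (C *\<^sub>v v) = 0\<^sub>v N" using z A C vc by simp
  hence "C *\<^sub>v v = 0\<^sub>v d" using iA A C vc unfolding inj_mat_def by auto
  hence "v = 0\<^sub>v e" using iC C vc unfolding inj_mat_def by auto
  then show "v = 0\<^sub>v (dim_col (A * C))" using C by simp
qed

lemma inj_nonzero:
  assumes A: "A \<in> carrier_mat N d" and inj: "inj_mat A" and d: "d > 0"
  shows "A \<noteq> 0\<^sub>m N d"
proof
  assume z: "A = 0\<^sub>m N d"
  have "A *\<^sub>v unit_vec d 0 = 0\<^sub>v N" using z by simp
  hence "unit_vec d 0 = (0\<^sub>v d :: complex vec)" using inj A unfolding inj_mat_def by auto
  moreover have "unit_vec d 0 $ 0 = (1::complex)" using d by simp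
  ultimately show False using d by simp
qed

lemma carrier_vec_0_eq: "v \<in> carrier_vec 0 \<Longrightarrow> v = 0\<^sub>v 0"
  by (intro eq_vecI) auto

lemma ker_subspace:
  assumes A: "A \<in> carrier_mat m n"
  shows "is_subspace n {v\<in>carrier_vec n. A *\<^sub>v v = 0\<^sub>v m}"
  unfolding is_subspace_def using A
  by (auto simp: mult_add_distrib_mat_vec mult_mat_vec)

lemma img_subspace:
  assumes A: "A \<in> carrier_mat m n"
  shows "is_subspace m (img A)"
  unfolding is_subspace_def img_def
proof (intro conjI ballI allI)
  show "(*\<^sub>v) A ` carrier_vec (dim_col A) \<subseteq> carrier_vec m" using A by auto
  show "0\<^sub>v m \<in> (*\<^sub>v) A ` carrier_vec (dim_col A)"
    using A by (intro image_eqI[of _ _ "0\<^sub>v n"]) auto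
  fix v w assume "v \<in> (*\<^sub>v) A ` carrier_vec (dim_col A)" "w \<in> (*\<^sub>v) A ` carrier_vec (dim_col A)"
  then obtain x y where "x \<in> carrier_vec n" "y \<in> carrier_vec n" "v = A *\<^sub>v x" "w = A *\<^sub>v y"
    using A by auto
  then show "v + w \<in> (*\<^sub>v) A ` carrier_vec (dim_col A)"
    using A by (intro image_eqI[of _ _ "x + y"]) (auto simp: mult_add_distrib_mat_vec)
next
  fix c :: complex and v assume "v \<in> (*\<^sub>v) A ` carrier_vec (dim_col A)"
  then obtain x where "x \<in> carrier_vec n" "v = A *\<^sub>v x" using A by auto
  then show "c \<cdot>\<^sub>v v \<in> (*\<^sub>v) A ` carrier_vec (dim_col A)"
    using A by (intro image_eqI[of _ _ "c \<cdot>\<^sub>v x"]) (auto simp: mult_mat_vec)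
qed

lemma subspace_sum: "is_subspace n W \<Longrightarrow> v \<in> W \<Longrightarrow> w \<in> W \<Longrightarrow> v + w \<in> W"
  unfolding is_subspace_def by auto
lemma subspace_smult: "is_subspace n W \<Longrightarrow> v \<in> W \<Longrightarrow> c \<cdot>\<^sub>v v \<in> W"
  unfolding is_subspace_def by auto
lemma subspace_zero: "is_subspace n W \<Longrightarrow> 0\<^sub>v n \<in> W"
  unfolding is_subspace_def by auto
lemma subspace_carrier: "is_subspace n W \<Longrightarrow> v \<in> W \<Longrightarrow> v \<in> carrier_vec n"
  unfolding is_subspace_def by auto

lemma append_col_mult:
  fixes B :: "complex mat"
  assumes B: "B \<in> carrier_mat N d" and w: "w \<in> carrier_vec N" and v: "v \<in> carrier_vec (Suc d)"
  shows "mat N (Suc d) (\<lambda>(i,j). if j < d then B $$ (i,j) else w $ i) *\<^sub>v v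
       = B *\<^sub>v vec d (\<lambda>j. v $ j) + v $ d \<cdot>\<^sub>v w"
proof (rule eq_vecI)
  fix i assume "i < dim_vec (B *\<^sub>v vec d (\<lambda>j. v $ j) + v $ d \<cdot>\<^sub>v w)"
  hence i: "i < N" using B w by simp
  show "(mat N (Suc d) (\<lambda>(i,j). if j < d then B $$ (i,j) else w $ i) *\<^sub>v v) $ i
       = (B *\<^sub>v vec d (\<lambda>j. v $ j) + v $ d \<cdot>\<^sub>v w) $ i"
    using i B w v by (simp add: row_def scalar_prod_def mult.commute)
qed (use B w in simp)

lemma extract_basis:
  assumes W: "is_subspace N W"
  shows "\<exists>d B. B \<in> carrier_mat N d \<and> inj_mat B \<and> img B = W"
proof -
  define D where "D = {d. \<exists>B\<in>carrier_mat N d. inj_mat B \<and> img B \<subseteq> W}"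
  have "0 \<in> D" unfolding D_def
  proof (intro CollectI bexI[of _ "0\<^sub>m N 0"] conjI)
    show "inj_mat (0\<^sub>m N 0)" unfolding inj_mat_def using carrier_vec_0_eq by auto
    show "img (0\<^sub>m N 0) \<subseteq> W" unfolding img_def using subspace_zero[OF W] by auto
  qed auto
  have "D \<subseteq> {..N}" unfolding D_def using inj_dim by auto
  hence fin: "finite D" using finite_subset by blast
  define d where "d = Max D"
  have "d \<in> D" unfolding d_def using fin \<open>0 \<in> D\<close> by (intro Max_in) auto
  then obtain B where B: "B \<in> carrier_mat N d" "inj_mat B" "img B \<subseteq> W" unfolding D_def by auto
  have "img B = W"
  proof (rule ccontr)
    assume "img B \<noteq> W"
    then obtain w where wW: "w \<in> W" and wn: "w \<notin> img B" using B(3) by auto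
    have w: "w \<in> carrier_vec N" using subspace_carrier[OF W wW] .
    define B' where "B' = mat N (Suc d) (\<lambda>(i,j). if j < d then B $$ (i,j) else w $ i)"
    have B'c: "B' \<in> carrier_mat N (Suc d)" unfolding B'_def by simp
    have B'v: "B' *\<^sub>v v = B *\<^sub>v vec d (\<lambda>j. v $ j) + v $ d \<cdot>\<^sub>v w" if "v \<in> carrier_vec (Suc d)" for v
      unfolding B'_def using append_col_mult[OF B(1) w that] .
    have "inj_mat B'" unfolding inj_mat_def
    proof (intro ballI impI)
      fix v assume v: "v \<in> carrier_vec (dim_col B')" and z: "B' *\<^sub>v v = 0\<^sub>v (dim_row B')"
      have vc: "v \<in> carrier_vec (Suc d)" using v B'c by simp
      define u where "u = vec d (\<lambda>j. v $ j)"
      have uc: "u \<in> carrier_vec d" unfolding u_def by simp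
      have z2: "B *\<^sub>v u + v $ d \<cdot>\<^sub>v w = 0\<^sub>v N" using z B'v[OF vc] B'c unfolding u_def by simp
      have vd: "v $ d = 0"
      proof (rule ccontr)
        assume c: "v $ d \<noteq> 0"
        define u' where "u' = vec d (\<lambda>j. - (v $ j) / v $ d)"
        have "w = B *\<^sub>v u'"
        proof (rule eq_vecI)
          fix i assume "i < dim_vec (B *\<^sub>v u')"
          hence i: "i < N" using B by simp
          have "(B *\<^sub>v u + v $ d \<cdot>\<^sub>v w) $ i = 0" using z2 i by simp
          hence e: "(B *\<^sub>v u) $ i + v $ d * w $ i = 0" using i B w uc by simp
          have "(B *\<^sub>v u') $ i = - (B *\<^sub>v u) $ i / v $ d"
            using i B unfolding u'_def u_def
            by (simp add: row_def scalar_prod_def sum_divide_distrib sum_negf[symmetric])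
          also have "\<dots> = w $ i" using e c by (simp add: field_simps add_eq_0_iff)
          finally show "w $ i = (B *\<^sub>v u') $ i" by simp
        qed (use B w in simp)
        moreover have "u' \<in> carrier_vec (dim_col B)" using B unfolding u'_def by simp
        ultimately have "w \<in> img B" unfolding img_def by blast
        with wn show False by simp
      qed
      have "(0::complex) \<cdot>\<^sub>v w = 0\<^sub>v N" by (intro eq_vecI) (use w in auto)
      hence "B *\<^sub>v u = 0\<^sub>v N" using z2 vd B uc w by simp
      hence "u = 0\<^sub>v d" using B uc unfolding inj_mat_def by auto
      show "v = 0\<^sub>v (dim_col B')"
      proof (rule eq_vecI)
        fix j assume "j < dim_vec (0\<^sub>v (dim_col B') :: complex vec)"
        hence j: "j < Suc d" using B'c by simp
        show "v $ j = 0\<^sub>v (dim_col B') $ j"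
        proof (cases "j < d")
          case True
          then have "u $ j = 0" using \<open>u = 0\<^sub>v d\<close> by simp
          then show ?thesis using True B'c j unfolding u_def by simp
        next
          case False
          then have "j = d" using j by simp
          then show ?thesis using vd B'c by simp
        qed
      qed (use vc B'c in simp)
    qed
    moreover have "img B' \<subseteq> W"
    proof
      fix x assume "x \<in> img B'"
      then obtain v where v: "v \<in> carrier_vec (Suc d)" "x = B' *\<^sub>v v" unfolding img_def using B'c by auto
      have "B *\<^sub>v vec d (\<lambda>j. v $ j) \<in> W" using B unfolding img_def by auto
      moreover have "v $ d \<cdot>\<^sub>v w \<in> W" using subspace_smult[OF W wW] .
      ultimately show "x \<in> W" using v B'v subspace_sum[OF W] by simp
    qed
    ultimately have "Suc d \<in> D" unfolding D_def using B'c by auto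
    hence "Suc d \<le> d" unfolding d_def using fin by simp
    then show False by simp
  qed
  then show ?thesis using B by auto
qed

definition adjM :: "complex mat \<Rightarrow> complex mat" where
  "adjM B = mat (dim_col B) (dim_row B) (\<lambda>(i,j). cnj (B $$ (j,i)))"

lemma adjM_carrier[simp]: "B \<in> carrier_mat N d \<Longrightarrow> adjM B \<in> carrier_mat d N"
  unfolding adjM_def by auto

lemma left_inv:
  assumes B: "B \<in> carrier_mat N d" and inj: "inj_mat B"
  shows "\<exists>L\<in>carrier_mat d N. L * B = 1\<^sub>m d"
proof -
  define M where "M = adjM B * B"
  have Mc: "M \<in> carrier_mat d d" unfolding M_def using B by (metis adjM_carrier mult_carrier_mat)
  have "inj_mat M" unfolding inj_mat_def
  proof (intro ballI impI)
    fix v assume v: "v \<in> carrier_vec (dim_col M)" and z: "M *\<^sub>v v = 0\<^sub>v (dim_row M)"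
    have vc: "v \<in> carrier_vec d" using v Mc by simp
    define w where "w = B *\<^sub>v v"
    have wc: "w \<in> carrier_vec N" unfolding w_def using B vc by simp
    have "adjM B *\<^sub>v w = M *\<^sub>v v" unfolding M_def w_def using B vc by (metis adjM_carrier assoc_mult_mat_vec)
    hence "adjM B *\<^sub>v w = 0\<^sub>v d" using z Mc by simp
    hence comp: "(\<Sum>i<N. cnj (B $$ (i,j)) * w $ i) = 0" if "j < d" for j
    proof -
      have "(adjM B *\<^sub>v w) $ j = 0" using \<open>adjM B *\<^sub>v w = 0\<^sub>v d\<close> that by simp
      then show ?thesis using that B wc unfolding adjM_def
        by (simp add: row_def scalar_prod_def lessThan_atLeast0)
    qed
    have "w \<bullet>c w = (\<Sum>i<N. w $ i * cnj (w $ i))"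
      using wc by (simp add: scalar_prod_def lessThan_atLeast0)
    also have "\<dots> = (\<Sum>i<N. w $ i * (\<Sum>j<d. cnj (B $$ (i,j)) * cnj (v $ j)))"
      unfolding w_def using B vc by (simp add: row_def scalar_prod_def lessThan_atLeast0)
    also have "\<dots> = (\<Sum>j<d. cnj (v $ j) * (\<Sum>i<N. cnj (B $$ (i,j)) * w $ i))"
      by (simp add: sum_distrib_left sum_distrib_right sum.swap[of _ "{..<N}"] mult_ac)
    also have "\<dots> = 0" using comp by simp
    finally have "w = 0\<^sub>v N" using conjugate_square_eq_0_vec[OF wc] by simp
    then show "v = 0\<^sub>v (dim_col M)" using inj B vc Mc unfolding inj_mat_def w_def by auto
  qed
  then obtain Mi where Mi: "Mi \<in> carrier_mat d d" "Mi * M = 1\<^sub>m d" using inj_sq_inv[OF Mc] by auto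
  have "(Mi * adjM B) * B = Mi * M" unfolding M_def using Mi B by (simp add: assoc_mult_mat[of _ d d _ N _ d])
  then show ?thesis using Mi B by (intro bexI[of _ "Mi * adjM B"]) auto
qed

definition intw :: "('g,'b) monoid_scheme \<Rightarrow> nat \<Rightarrow> ('g \<Rightarrow> complex mat) \<Rightarrow> nat \<Rightarrow> ('g \<Rightarrow> complex mat) \<Rightarrow> complex mat \<Rightarrow> bool" where
  "intw \<Gamma> n \<rho> m \<sigma> A \<longleftrightarrow> A \<in> carrier_mat m n \<and> (\<forall>g\<in>carrier \<Gamma>. A * \<rho> g = \<sigma> g * A)"

definition invar :: "('g,'b) monoid_scheme \<Rightarrow> nat \<Rightarrow> ('g \<Rightarrow> complex mat) \<Rightarrow> complex vec set \<Rightarrow> bool" where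
  "invar \<Gamma> n \<rho> W \<longleftrightarrow> is_subspace n W \<and> (\<forall>g\<in>carrier \<Gamma>. \<forall>w\<in>W. \<rho> g *\<^sub>v w \<in> W)"

lemma rep_carrier: "is_rep \<Gamma> n \<rho> \<Longrightarrow> g \<in> carrier \<Gamma> \<Longrightarrow> \<rho> g \<in> carrier_mat n n"
  unfolding is_rep_def by auto
lemma rep_mult: "is_rep \<Gamma> n \<rho> \<Longrightarrow> g \<in> carrier \<Gamma> \<Longrightarrow> h \<in> carrier \<Gamma> \<Longrightarrow> \<rho> (g \<otimes>\<^bsub>\<Gamma>\<^esub> h) = \<rho> g * \<rho> h"
  unfolding is_rep_def by auto
lemma rep_one: "is_rep \<Gamma> n \<rho> \<Longrightarrow> \<rho> \<one>\<^bsub>\<Gamma>\<^esub> = 1\<^sub>m n"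
  unfolding is_rep_def by auto
lemma irrep_rep: "is_irrep \<Gamma> n \<rho> \<Longrightarrow> is_rep \<Gamma> n \<rho>"
  unfolding is_irrep_def by auto
lemma irrep_pos: "is_irrep \<Gamma> n \<rho> \<Longrightarrow> n > 0"
  unfolding is_irrep_def by auto
lemma irrep_invar: "is_irrep \<Gamma> n \<rho> \<Longrightarrow> invar \<Gamma> n \<rho> W \<Longrightarrow> W = {0\<^sub>v n} \<or> W = carrier_vec n"
  unfolding is_irrep_def invar_def by blast
lemma intw_carrier: "intw \<Gamma> n \<rho> m \<sigma> A \<Longrightarrow> A \<in> carrier_mat m n"
  unfolding intw_def by auto
lemma intw_eq: "intw \<Gamma> n \<rho> m \<sigma> A \<Longrightarrow> g \<in> carrier \<Gamma> \<Longrightarrow> A * \<rho> g = \<sigma> g * A"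
  unfolding intw_def by auto

lemma mat_eq_by_vec:
  assumes X: "X \<in> carrier_mat N d" and Y: "Y \<in> carrier_mat N d"
    and e: "\<And>v. v \<in> carrier_vec d \<Longrightarrow> X *\<^sub>v v = Y *\<^sub>v v"
  shows "X = (Y :: complex mat)"
proof (rule eq_matI)
  fix i j assume i: "i < dim_row Y" and j: "j < dim_col Y"
  have "(X *\<^sub>v unit_vec d j) $ i = X $$ (i,j)" using X Y i j by simp
  moreover have "(Y *\<^sub>v unit_vec d j) $ i = Y $$ (i,j)" using X Y i j by simp
  ultimately show "X $$ (i,j) = Y $$ (i,j)" using e[of "unit_vec d j"] by simp
qed (use X Y in auto)

lemma assoc4:
  assumes A: "(A::complex mat) \<in> carrier_mat a b" and X: "X \<in> carrier_mat b b" and Y: "Y \<in> carrier_mat b b"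
    and C: "C \<in> carrier_mat b c"
  shows "A * (X * Y) * C = A * X * (Y * C)"
proof -
  have XY: "X * Y \<in> carrier_mat b b" using X Y by simp
  have YC: "Y * C \<in> carrier_mat b c" using Y C by simp
  have "A * (X * Y) * C = A * ((X * Y) * C)" using assoc_mult_mat[OF A XY C] .
  also have "\<dots> = A * (X * (Y * C))" using assoc_mult_mat[OF X Y C] by simp
  also have "\<dots> = A * X * (Y * C)" using assoc_mult_mat[OF A X YC] by simp
  finally show ?thesis .
qed

lemma ker_invar:
  assumes r: "is_rep \<Gamma> n \<rho>" and s: "is_rep \<Gamma> m \<sigma>" and A: "intw \<Gamma> n \<rho> m \<sigma> A"
  shows "invar \<Gamma> n \<rho> {v\<in>carrier_vec n. A *\<^sub>v v = 0\<^sub>v m}"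
  unfolding invar_def
proof (intro conjI ballI)
  have Ac: "A \<in> carrier_mat m n" using intw_carrier[OF A] .
  show "is_subspace n {v \<in> carrier_vec n. A *\<^sub>v v = 0\<^sub>v m}" using ker_subspace[OF Ac] .
  fix g w assume g: "g \<in> carrier \<Gamma>" and w: "w \<in> {v \<in> carrier_vec n. A *\<^sub>v v = 0\<^sub>v m}"
  have rg: "\<rho> g \<in> carrier_mat n n" and sg: "\<sigma> g \<in> carrier_mat m m" using rep_carrier[OF r g] rep_carrier[OF s g] by auto
  have "A *\<^sub>v (\<rho> g *\<^sub>v w) = (A * \<rho> g) *\<^sub>v w" using Ac rg w by simp
  also have "\<dots> = (\<sigma> g * A) *\<^sub>v w" using intw_eq[OF A g] by simp
  also have "\<dots> = \<sigma> g *\<^sub>v (A *\<^sub>v w)" using Ac sg w by simp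
  also have "\<dots> = 0\<^sub>v m" using w sg by simp
  finally show "\<rho> g *\<^sub>v w \<in> {v \<in> carrier_vec n. A *\<^sub>v v = 0\<^sub>v m}" using rg w by simp
qed

lemma img_invar:
  assumes r: "is_rep \<Gamma> n \<rho>" and s: "is_rep \<Gamma> m \<sigma>" and A: "intw \<Gamma> n \<rho> m \<sigma> A"
  shows "invar \<Gamma> m \<sigma> (img A)"
  unfolding invar_def
proof (intro conjI ballI)
  have Ac: "A \<in> carrier_mat m n" using intw_carrier[OF A] .
  show "is_subspace m (img A)" using img_subspace[OF Ac] .
  fix g w assume g: "g \<in> carrier \<Gamma>" and w: "w \<in> img A"
  then obtain v where v: "v \<in> carrier_vec n" "w = A *\<^sub>v v" unfolding img_def using Ac by auto
  have rg: "\<rho> g \<in> carrier_mat n n" and sg: "\<sigma> g \<in> carrier_mat m m" using rep_carrier[OF r g] rep_carrier[OF s g] by auto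
  have "\<sigma> g *\<^sub>v w = (\<sigma> g * A) *\<^sub>v v" using v Ac sg by simp
  also have "\<dots> = (A * \<rho> g) *\<^sub>v v" using intw_eq[OF A g] by simp
  also have "\<dots> = A *\<^sub>v (\<rho> g *\<^sub>v v)" using Ac rg v by simp
  finally show "\<sigma> g *\<^sub>v w \<in> img A" unfolding img_def using Ac rg v by auto
qed

lemma irr_inj:
  assumes r: "is_irrep \<Gamma> n \<rho>" and s: "is_rep \<Gamma> m \<sigma>" and A: "intw \<Gamma> n \<rho> m \<sigma> A"
    and nz: "A \<noteq> 0\<^sub>m m n"
  shows "inj_mat A"
proof -
  have Ac: "A \<in> carrier_mat m n" using intw_carrier[OF A] .
  let ?K = "{v\<in>carrier_vec n. A *\<^sub>v v = 0\<^sub>v m}"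
  have "invar \<Gamma> n \<rho> ?K" using ker_invar[OF irrep_rep[OF r] s A] .
  moreover have "?K \<noteq> carrier_vec n" using nonzero_mat_vec[OF Ac nz] by auto
  ultimately have "?K = {0\<^sub>v n}" using irrep_invar[OF r] by blast
  then show ?thesis unfolding inj_mat_def using Ac by auto
qed

lemma irr_surj:
  assumes r: "is_rep \<Gamma> n \<rho>" and s: "is_irrep \<Gamma> m \<sigma>" and A: "intw \<Gamma> n \<rho> m \<sigma> A"
    and nz: "A \<noteq> 0\<^sub>m m n"
  shows "img A = carrier_vec m"
proof -
  have Ac: "A \<in> carrier_mat m n" using intw_carrier[OF A] .
  have "invar \<Gamma> m \<sigma> (img A)" using img_invar[OF r irrep_rep[OF s] A] .
  moreover have "img A \<noteq> {0\<^sub>v m}" using nonzero_mat_vec[OF Ac nz] unfolding img_def using Ac by auto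
  ultimately show ?thesis using irrep_invar[OF s] by blast
qed

lemma schur:
  assumes r: "is_irrep \<Gamma> n \<rho>" and s: "is_irrep \<Gamma> m \<sigma>" and A: "intw \<Gamma> n \<rho> m \<sigma> A"
    and nz: "A \<noteq> 0\<^sub>m m n"
  shows "n = m \<and> invertible_mat A \<and> (\<rho>, \<sigma>) \<in> rep_iso \<Gamma> n"
proof -
  have Ac: "A \<in> carrier_mat m n" using intw_carrier[OF A] .
  have i: "inj_mat A" using irr_inj[OF r irrep_rep[OF s] A nz] .
  have "n \<le> m" using inj_dim[OF Ac i] .
  moreover have "m \<le> n" using surj_dim[OF Ac] irr_surj[OF irrep_rep[OF r] s A nz] by simp
  ultimately have nm: "n = m" by simp
  have inv: "invertible_mat A" using inj_sq_invertible[of A n] Ac nm i by simp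
  have "(\<rho>, \<sigma>) \<in> rep_iso \<Gamma> n" unfolding rep_iso_def using Ac nm inv intw_eq[OF A] by auto
  then show ?thesis using nm inv by simp
qed

lemma img_zero_cols: "B \<in> carrier_mat N 0 \<Longrightarrow> img B = {0\<^sub>v N}"
  unfolding img_def using carrier_vec_0_eq
  by (auto intro!: image_eqI[of _ _ "0\<^sub>v 0"] eq_vecI simp: row_def scalar_prod_def)

lemma extract_rep:
  assumes r: "is_rep \<Gamma> N \<pi>" and W: "invar \<Gamma> N \<pi> W"
  shows "\<exists>d \<sigma> B. is_rep \<Gamma> d \<sigma> \<and> B \<in> carrier_mat N d \<and> inj_mat B \<and> img B = W \<and> intw \<Gamma> d \<sigma> N \<pi> B"
proof -
  obtain d B where B: "B \<in> carrier_mat N d" "inj_mat B" "img B = W"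
    using extract_basis W unfolding invar_def by blast
  obtain L where L: "L \<in> carrier_mat d N" "L * B = 1\<^sub>m d" using left_inv[OF B(1,2)] by auto
  define \<sigma> where "\<sigma> = (\<lambda>g. L * \<pi> g * B)"
  have key: "\<pi> g * B = B * \<sigma> g" if g: "g \<in> carrier \<Gamma>" for g
  proof -
    have pg: "\<pi> g \<in> carrier_mat N N" using rep_carrier[OF r g] .
    show ?thesis
    proof (rule mat_eq_by_vec[of _ N d])
      show "\<pi> g * B \<in> carrier_mat N d" using pg B by simp
      show "B * \<sigma> g \<in> carrier_mat N d" unfolding \<sigma>_def using pg B L by simp
      fix v :: "complex vec" assume v: "v \<in> carrier_vec d"
      have "\<pi> g *\<^sub>v (B *\<^sub>v v) \<in> W" using W g B v unfolding invar_def img_def by auto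
      then obtain u where u: "u \<in> carrier_vec d" "\<pi> g *\<^sub>v (B *\<^sub>v v) = B *\<^sub>v u"
        using B unfolding img_def by auto
      have c1: "\<pi> g * B \<in> carrier_mat N d" using pg B by simp
      have c2: "L * (\<pi> g * B) \<in> carrier_mat d d" using L c1 by simp
      have sg: "\<sigma> g = L * (\<pi> g * B)" unfolding \<sigma>_def using L pg B by simp
      have "(B * \<sigma> g) *\<^sub>v v = B *\<^sub>v (L *\<^sub>v (\<pi> g *\<^sub>v (B *\<^sub>v v)))"
        unfolding sg assoc_mult_mat_vec[OF B(1) c2 v] assoc_mult_mat_vec[OF L(1) c1 v] assoc_mult_mat_vec[OF pg B(1) v] ..
      also have "\<dots> = B *\<^sub>v ((L * B) *\<^sub>v u)" using u L(1) B(1) by simp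
      also have "\<dots> = B *\<^sub>v u" using L u by simp
      also have "\<dots> = (\<pi> g * B) *\<^sub>v v" using u pg B v by simp
      finally show "(\<pi> g * B) *\<^sub>v v = (B * \<sigma> g) *\<^sub>v v" by simp
    qed
  qed
  have sc: "\<sigma> g \<in> carrier_mat d d" if "g \<in> carrier \<Gamma>" for g
    unfolding \<sigma>_def using rep_carrier[OF r that] L B by simp
  have "is_rep \<Gamma> d \<sigma>" unfolding is_rep_def
  proof (intro conjI ballI)
    fix g h assume g: "g \<in> carrier \<Gamma>" and h: "h \<in> carrier \<Gamma>"
    have pg: "\<pi> g \<in> carrier_mat N N" and ph: "\<pi> h \<in> carrier_mat N N" using rep_carrier[OF r g] rep_carrier[OF r h] by auto
    have "\<sigma> (g \<otimes>\<^bsub>\<Gamma>\<^esub> h) = L * (\<pi> g * \<pi> h) * B" unfolding \<sigma>_def using rep_mult[OF r g h] by simp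
    also have "\<dots> = L * \<pi> g * (\<pi> h * B)" using assoc4[OF L(1) pg ph B(1)] .
    also have "\<dots> = L * \<pi> g * (B * \<sigma> h)" using key[OF h] by simp
    also have "\<dots> = \<sigma> g * \<sigma> h"
    proof -
      have P: "L * \<pi> g \<in> carrier_mat d N" using L(1) pg by simp
      have Q: "L * \<pi> h * B \<in> carrier_mat d d" using L(1) ph B(1) by simp
      show ?thesis unfolding \<sigma>_def by (rule assoc_mult_mat[OF P B(1) Q, symmetric])
    qed
    finally show "\<sigma> (g \<otimes>\<^bsub>\<Gamma>\<^esub> h) = \<sigma> g * \<sigma> h" .
  next
    show "\<sigma> \<one>\<^bsub>\<Gamma>\<^esub> = 1\<^sub>m d" unfolding \<sigma>_def rep_one[OF r] using L B by simp
  qed (use sc in auto)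
  moreover have "intw \<Gamma> d \<sigma> N \<pi> B" unfolding intw_def using B key by auto
  ultimately show ?thesis using B by blast
qed

lemma extract_irrep:
  assumes r: "is_rep \<Gamma> N \<pi>" and W: "invar \<Gamma> N \<pi> W" and nz: "W \<noteq> {0\<^sub>v N}"
  shows "\<exists>d \<sigma> B. is_irrep \<Gamma> d \<sigma> \<and> B \<in> carrier_mat N d \<and> inj_mat B \<and> img B \<subseteq> W \<and> intw \<Gamma> d \<sigma> N \<pi> B"
proof -
  define D where "D = {d. d > 0 \<and> (\<exists>\<sigma> B. is_rep \<Gamma> d \<sigma> \<and> B \<in> carrier_mat N d \<and> inj_mat B \<and> img B \<subseteq> W \<and> intw \<Gamma> d \<sigma> N \<pi> B)}"
  obtain d0 \<sigma>0 B0 where E0: "is_rep \<Gamma> d0 \<sigma>0" "B0 \<in> carrier_mat N d0" "inj_mat B0" "img B0 = W" "intw \<Gamma> d0 \<sigma>0 N \<pi> B0"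
    using extract_rep[OF r W] by blast
  have "d0 > 0" using E0(2,4) nz img_zero_cols by (cases d0) auto
  hence "d0 \<in> D" unfolding D_def using E0 by blast
  define d where "d = (LEAST d. d \<in> D)"
  have "d \<in> D" unfolding d_def using \<open>d0 \<in> D\<close> by (rule LeastI)
  then obtain \<sigma> B where d: "d > 0" and E: "is_rep \<Gamma> d \<sigma>" "B \<in> carrier_mat N d" "inj_mat B" "img B \<subseteq> W" "intw \<Gamma> d \<sigma> N \<pi> B"
    unfolding D_def by blast
  have "is_irrep \<Gamma> d \<sigma>" unfolding is_irrep_def
  proof (intro conjI notI E(1) d)
    assume "\<exists>U. is_subspace d U \<and> U \<noteq> {0\<^sub>v d} \<and> U \<noteq> carrier_vec d \<and> (\<forall>g\<in>carrier \<Gamma>. \<forall>w\<in>U. \<sigma> g *\<^sub>v w \<in> U)"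
    then obtain U where U: "invar \<Gamma> d \<sigma> U" "U \<noteq> {0\<^sub>v d}" "U \<noteq> carrier_vec d" unfolding invar_def by blast
    obtain d' \<tau> C where C: "is_rep \<Gamma> d' \<tau>" "C \<in> carrier_mat d d'" "inj_mat C" "img C = U" "intw \<Gamma> d' \<tau> d \<sigma> C"
      using extract_rep[OF E(1) U(1)] by blast
    have "d' > 0" using C(2,4) U(2) img_zero_cols by (cases d') auto
    have "d' \<le> d" using inj_dim[OF C(2,3)] .
    moreover have "d' \<noteq> d"
    proof
      assume dd: "d' = d"
      then obtain Ci where Ci: "Ci \<in> carrier_mat d d" "C * Ci = 1\<^sub>m d" using inj_sq_inv[of C d] C(2,3) by auto
      have "carrier_vec d \<subseteq> img C"
      proof
        fix x :: "complex vec" assume x: "x \<in> carrier_vec d"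
        have "x = C *\<^sub>v (Ci *\<^sub>v x)" using Ci C(2) x dd by (metis assoc_mult_mat_vec one_mult_mat_vec)
        then show "x \<in> img C" unfolding img_def using Ci C(2) x dd by auto
      qed
      moreover have "U \<subseteq> carrier_vec d" using U(1) unfolding invar_def is_subspace_def by blast
      ultimately show False using C(4) U(3) by blast
    qed
    ultimately have lt: "d' < d" by simp
    have BC: "B * C \<in> carrier_mat N d'" using E(2) C(2) by simp
    have "intw \<Gamma> d' \<tau> N \<pi> (B * C)" unfolding intw_def
    proof (intro conjI ballI BC)
      fix g assume g: "g \<in> carrier \<Gamma>"
      have tg: "\<tau> g \<in> carrier_mat d' d'" and sg: "\<sigma> g \<in> carrier_mat d d" and pg: "\<pi> g \<in> carrier_mat N N"
        using rep_carrier[OF C(1) g] rep_carrier[OF E(1) g] rep_carrier[OF r g] by auto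
      have "B * C * \<tau> g = B * (C * \<tau> g)" using E(2) C(2) tg by simp
      also have "\<dots> = B * (\<sigma> g * C)" using intw_eq[OF C(5) g] by simp
      also have "\<dots> = (B * \<sigma> g) * C" using E(2) C(2) sg by simp
      also have "\<dots> = (\<pi> g * B) * C" using intw_eq[OF E(5) g] by simp
      also have "\<dots> = \<pi> g * (B * C)" using E(2) C(2) pg by simp
      finally show "B * C * \<tau> g = \<pi> g * (B * C)" .
    qed
    moreover have "inj_mat (B * C)" using inj_mult[OF E(2) C(2) E(3) C(3)] .
    moreover have "img (B * C) \<subseteq> W"
    proof
      fix x assume "x \<in> img (B * C)"
      then obtain v where v: "v \<in> carrier_vec d'" "x = (B * C) *\<^sub>v v" unfolding img_def using BC by auto
      then have "x = B *\<^sub>v (C *\<^sub>v v)" using E(2) C(2) by simp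
      moreover have "C *\<^sub>v v \<in> carrier_vec d" using C(2) v by simp
      ultimately have "x \<in> img B" unfolding img_def using E(2) by auto
      then show "x \<in> W" using E(4) by auto
    qed
    ultimately have "d' \<in> D" unfolding D_def using \<open>d' > 0\<close> C(1) BC by blast
    hence "d \<le> d'" unfolding d_def by (rule Least_le)
    with lt show False by simp
  qed
  then show ?thesis using E by blast
qed

definition dual :: "('g,'b) monoid_scheme \<Rightarrow> ('g \<Rightarrow> complex mat) \<Rightarrow> 'g \<Rightarrow> complex mat" where
  "dual \<Gamma> \<rho> g = transpose_mat (\<rho> (inv\<^bsub>\<Gamma>\<^esub> g))"

lemma dual_rep:
  assumes G: "group \<Gamma>" and r: "is_rep \<Gamma> n \<rho>"
  shows "is_rep \<Gamma> n (dual \<Gamma> \<rho>)"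
  unfolding is_rep_def
proof (intro conjI ballI)
  fix g assume g: "g \<in> carrier \<Gamma>"
  show "dual \<Gamma> \<rho> g \<in> carrier_mat n n" unfolding dual_def
    using rep_carrier[OF r group.inv_closed[OF G g]] by simp
next
  fix g h assume g: "g \<in> carrier \<Gamma>" and h: "h \<in> carrier \<Gamma>"
  have ig: "inv\<^bsub>\<Gamma>\<^esub> g \<in> carrier \<Gamma>" and ih: "inv\<^bsub>\<Gamma>\<^esub> h \<in> carrier \<Gamma>" using group.inv_closed[OF G] g h by auto
  have "dual \<Gamma> \<rho> (g \<otimes>\<^bsub>\<Gamma>\<^esub> h) = transpose_mat (\<rho> (inv\<^bsub>\<Gamma>\<^esub> h) * \<rho> (inv\<^bsub>\<Gamma>\<^esub> g))"
    unfolding dual_def using group.inv_mult_group[OF G g h] rep_mult[OF r ih ig] by simp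
  also have "\<dots> = dual \<Gamma> \<rho> g * dual \<Gamma> \<rho> h" unfolding dual_def
    using transpose_mult[OF rep_carrier[OF r ih] rep_carrier[OF r ig]] by simp
  finally show "dual \<Gamma> \<rho> (g \<otimes>\<^bsub>\<Gamma>\<^esub> h) = dual \<Gamma> \<rho> g * dual \<Gamma> \<rho> h" .
next
  show "dual \<Gamma> \<rho> \<one>\<^bsub>\<Gamma>\<^esub> = 1\<^sub>m n" unfolding dual_def
    using rep_one[OF r] group.is_monoid[OF G] monoid.inv_one by fastforce
qed

lemma dual_dual:
  assumes G: "group \<Gamma>" and g: "g \<in> carrier \<Gamma>"
  shows "dual \<Gamma> (dual \<Gamma> \<rho>) g = \<rho> g"
  unfolding dual_def using group.inv_inv[OF G g] by simp

lemma intw_cong: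
  assumes "\<And>g. g \<in> carrier \<Gamma> \<Longrightarrow> \<rho> g = \<rho>' g" "\<And>g. g \<in> carrier \<Gamma> \<Longrightarrow> \<sigma> g = \<sigma>' g"
  shows "intw \<Gamma> n \<rho> m \<sigma> A = intw \<Gamma> n \<rho>' m \<sigma>' A"
  unfolding intw_def using assms by auto

lemma rep_cong:
  assumes M: "monoid \<Gamma>" and "\<And>g. g \<in> carrier \<Gamma> \<Longrightarrow> \<rho> g = \<rho>' g"
  shows "is_rep \<Gamma> n \<rho> = is_rep \<Gamma> n \<rho>'"
  unfolding is_rep_def using assms monoid.m_closed[OF M] monoid.one_closed[OF M] by auto

lemma irrep_cong:
  assumes M: "monoid \<Gamma>" and "\<And>g. g \<in> carrier \<Gamma> \<Longrightarrow> \<rho> g = \<rho>' g"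
  shows "is_irrep \<Gamma> n \<rho> = is_irrep \<Gamma> n \<rho>'"
  unfolding is_irrep_def using rep_cong[of \<Gamma> \<rho> \<rho>', OF assms] assms(2) by auto

lemma intw_dual:
  assumes G: "group \<Gamma>" and r: "is_rep \<Gamma> n \<rho>" and s: "is_rep \<Gamma> m \<sigma>" and A: "intw \<Gamma> n \<rho> m \<sigma> A"
  shows "intw \<Gamma> m (dual \<Gamma> \<sigma>) n (dual \<Gamma> \<rho>) (transpose_mat A)"
  unfolding intw_def
proof (intro conjI ballI)
  have Ac: "A \<in> carrier_mat m n" using intw_carrier[OF A] .
  show "transpose_mat A \<in> carrier_mat n m" using Ac by simp
  fix g assume g: "g \<in> carrier \<Gamma>"
  have ig: "inv\<^bsub>\<Gamma>\<^esub> g \<in> carrier \<Gamma>" using group.inv_closed[OF G g] .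
  have "transpose_mat A * dual \<Gamma> \<sigma> g = transpose_mat (\<sigma> (inv\<^bsub>\<Gamma>\<^esub> g) * A)"
    unfolding dual_def using transpose_mult[OF rep_carrier[OF s ig] Ac] by simp
  also have "\<dots> = transpose_mat (A * \<rho> (inv\<^bsub>\<Gamma>\<^esub> g))" using intw_eq[OF A ig] by simp
  also have "\<dots> = dual \<Gamma> \<rho> g * transpose_mat A"
    unfolding dual_def using transpose_mult[OF Ac rep_carrier[OF r ig]] by simp
  finally show "transpose_mat A * dual \<Gamma> \<sigma> g = dual \<Gamma> \<rho> g * transpose_mat A" .
qed

lemma intw_undual:
  assumes G: "group \<Gamma>" and r: "is_rep \<Gamma> n \<rho>" and s: "is_rep \<Gamma> m \<sigma>"
    and X: "intw \<Gamma> n (dual \<Gamma> \<rho>) m (dual \<Gamma> \<sigma>) X"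
  shows "intw \<Gamma> m \<sigma> n \<rho> (transpose_mat X)"
proof -
  have "intw \<Gamma> m (dual \<Gamma> (dual \<Gamma> \<sigma>)) n (dual \<Gamma> (dual \<Gamma> \<rho>)) (transpose_mat X)"
    using intw_dual[OF G dual_rep[OF G r] dual_rep[OF G s] X] .
  then show ?thesis using intw_cong[of \<Gamma> "dual \<Gamma> (dual \<Gamma> \<sigma>)" \<sigma> "dual \<Gamma> (dual \<Gamma> \<rho>)" \<rho>] dual_dual[OF G] by blast
qed

lemma transpose_zero: "transpose_mat (0\<^sub>m a b) = (0\<^sub>m b a :: complex mat)"
  by (intro eq_matI) auto

lemma transpose_zero_iff:
  assumes "(A :: complex mat) \<in> carrier_mat m n"
  shows "transpose_mat A = 0\<^sub>m n m \<longleftrightarrow> A = 0\<^sub>m m n"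
proof
  assume "transpose_mat A = 0\<^sub>m n m"
  then have "transpose_mat (transpose_mat A) = transpose_mat (0\<^sub>m n m :: complex mat)" by simp
  then show "A = 0\<^sub>m m n" by (simp add: transpose_zero)
qed (simp add: transpose_zero)

lemma dual_irrep:
  assumes G: "group \<Gamma>" and r: "is_irrep \<Gamma> n \<rho>"
  shows "is_irrep \<Gamma> n (dual \<Gamma> \<rho>)"
  unfolding is_irrep_def
proof (intro conjI notI)
  have rr: "is_rep \<Gamma> n \<rho>" using irrep_rep[OF r] .
  show dr: "is_rep \<Gamma> n (dual \<Gamma> \<rho>)" using dual_rep[OF G rr] .
  show "n > 0" using irrep_pos[OF r] .
  assume "\<exists>U. is_subspace n U \<and> U \<noteq> {0\<^sub>v n} \<and> U \<noteq> carrier_vec n \<and> (\<forall>g\<in>carrier \<Gamma>. \<forall>w\<in>U. dual \<Gamma> \<rho> g *\<^sub>v w \<in> U)"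
  then obtain U where U: "invar \<Gamma> n (dual \<Gamma> \<rho>) U" "U \<noteq> {0\<^sub>v n}" "U \<noteq> carrier_vec n" unfolding invar_def by blast
  obtain d \<tau> B where B: "is_rep \<Gamma> d \<tau>" "B \<in> carrier_mat n d" "inj_mat B" "img B = U" "intw \<Gamma> d \<tau> n (dual \<Gamma> \<rho>) B"
    using extract_rep[OF dr U(1)] by blast
  have d0: "d > 0" using B(2,4) U(2) img_zero_cols by (cases d) auto
  have "d \<le> n" using inj_dim[OF B(2,3)] .
  moreover have "d \<noteq> n"
  proof
    assume dd: "d = n"
    then obtain Bi where Bi: "Bi \<in> carrier_mat n n" "B * Bi = 1\<^sub>m n" using inj_sq_inv[of B n] B(2,3) by auto
    have "carrier_vec n \<subseteq> img B"
    proof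
      fix x :: "complex vec" assume x: "x \<in> carrier_vec n"
      have "x = B *\<^sub>v (Bi *\<^sub>v x)" using Bi B(2) x dd by (metis assoc_mult_mat_vec one_mult_mat_vec)
      then show "x \<in> img B" unfolding img_def using Bi B(2) x dd by auto
    qed
    moreover have "U \<subseteq> carrier_vec n" using U(1) unfolding invar_def is_subspace_def by blast
    ultimately show False using B(4) U(3) by blast
  qed
  ultimately have dn: "d < n" by simp
  have "intw \<Gamma> n (dual \<Gamma> (dual \<Gamma> \<rho>)) d (dual \<Gamma> \<tau>) (transpose_mat B)"
    using intw_dual[OF G B(1) dr B(5)] .
  hence BT: "intw \<Gamma> n \<rho> d (dual \<Gamma> \<tau>) (transpose_mat B)"
    using intw_cong[of \<Gamma> "dual \<Gamma> (dual \<Gamma> \<rho>)" \<rho> "dual \<Gamma> \<tau>" "dual \<Gamma> \<tau>"] dual_dual[OF G] by blast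
  have "B \<noteq> 0\<^sub>m n d" using inj_nonzero[OF B(2,3) d0] .
  hence "transpose_mat B \<noteq> 0\<^sub>m d n" using transpose_zero_iff[OF B(2)] by simp
  hence "inj_mat (transpose_mat B)" using irr_inj[OF r dual_rep[OF G B(1)] BT] by simp
  hence "n \<le> d" using inj_dim[of "transpose_mat B" d n] B(2) by simp
  with dn show False by simp
qed

lemma rep_iso_sym:
  assumes iso: "(\<rho>, \<sigma>) \<in> rep_iso \<Gamma> n" and r: "is_rep \<Gamma> n \<rho>" and s: "is_rep \<Gamma> n \<sigma>"
  shows "(\<sigma>, \<rho>) \<in> rep_iso \<Gamma> n"
proof -
  obtain P where P: "P \<in> carrier_mat n n" "invertible_mat P" "\<forall>g\<in>carrier \<Gamma>. P * \<rho> g = \<sigma> g * P"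
    using iso unfolding rep_iso_def by auto
  obtain Q where Q: "inverts_mat P Q" "inverts_mat Q P" using P(2) unfolding invertible_mat_def by auto
  have PQ: "P * Q = 1\<^sub>m n" using Q(1) P(1) unfolding inverts_mat_def by simp
  have Qc: "Q \<in> carrier_mat n n"
  proof -
    have "dim_col Q = n" using arg_cong[OF PQ, of dim_col] by simp
    moreover have "dim_row Q = n" using Q(2) P(1) arg_cong[OF PQ, of dim_col]
      unfolding inverts_mat_def by (metis carrier_matD(2) index_mult_mat(3) index_one_mat(3))
    ultimately show ?thesis by auto
  qed
  have QP: "Q * P = 1\<^sub>m n" using Q(2) Qc unfolding inverts_mat_def by simp
  have "Q * \<sigma> g = \<rho> g * Q" if g: "g \<in> carrier \<Gamma>" for g
  proof -
    have c: "\<rho> g \<in> carrier_mat n n" "\<sigma> g \<in> carrier_mat n n" using rep_carrier[OF r g] rep_carrier[OF s g] by auto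
    have "Q * \<sigma> g = Q * \<sigma> g * (P * Q)" using PQ Qc c by simp
    also have "\<dots> = Q * (\<sigma> g * P) * Q" using Qc c P(1) by (simp add: assoc_mult_mat[of _ n n _ n _ n])
    also have "\<dots> = Q * (P * \<rho> g) * Q" using P(3) g by simp
    also have "\<dots> = (Q * P) * \<rho> g * Q" using Qc c P(1) by (simp add: assoc_mult_mat[of _ n n _ n _ n])
    also have "\<dots> = \<rho> g * Q" using QP c Qc by simp
    finally show ?thesis .
  qed
  moreover have "invertible_mat Q" using Qc PQ QP P(1) unfolding invertible_mat_def inverts_mat_def
    by (intro conjI exI[of _ P]) auto
  ultimately show ?thesis unfolding rep_iso_def using Qc by auto
qed

lemma invertible_inj:
  assumes P: "P \<in> carrier_mat n n" and i: "invertible_mat P"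
  shows "inj_mat P"
proof -
  obtain B where B: "inverts_mat P B" "inverts_mat B P" using i unfolding invertible_mat_def by auto
  have PB: "P * B = 1\<^sub>m n" using B(1) P unfolding inverts_mat_def by simp
  have dc: "dim_col B = n" using arg_cong[OF PB, of dim_col] by simp
  have BP: "B * P = 1\<^sub>m (dim_row B)" using B(2) unfolding inverts_mat_def by simp
  have dr: "dim_row B = n" using arg_cong[OF BP, of dim_col] P by simp
  have Bc: "B \<in> carrier_mat n n" using dc dr by auto
  show ?thesis unfolding inj_mat_def
  proof (intro ballI impI)
    fix v assume v: "v \<in> carrier_vec (dim_col P)" and z: "P *\<^sub>v v = 0\<^sub>v (dim_row P)"
    have vc: "v \<in> carrier_vec n" using v P by simp
    have "v = (B * P) *\<^sub>v v" using BP dr vc by simp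
    also have "\<dots> = B *\<^sub>v (P *\<^sub>v v)" using Bc P vc by simp
    also have "\<dots> = 0\<^sub>v n" using z Bc P by simp
    finally show "v = 0\<^sub>v (dim_col P)" using P by simp
  qed
qed

lemma rep_iso_trans:
  assumes i1: "(\<rho>, \<sigma>) \<in> rep_iso \<Gamma> n" and i2: "(\<sigma>, \<tau>) \<in> rep_iso \<Gamma> n"
    and r: "is_rep \<Gamma> n \<rho>" and s: "is_rep \<Gamma> n \<sigma>" and t: "is_rep \<Gamma> n \<tau>"
  shows "(\<rho>, \<tau>) \<in> rep_iso \<Gamma> n"
proof -
  obtain P where P: "P \<in> carrier_mat n n" "invertible_mat P" "\<forall>g\<in>carrier \<Gamma>. P * \<rho> g = \<sigma> g * P"
    using i1 unfolding rep_iso_def by auto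
  obtain Q where Q: "Q \<in> carrier_mat n n" "invertible_mat Q" "\<forall>g\<in>carrier \<Gamma>. Q * \<sigma> g = \<tau> g * Q"
    using i2 unfolding rep_iso_def by auto
  have "Q * P * \<rho> g = \<tau> g * (Q * P)" if g: "g \<in> carrier \<Gamma>" for g
  proof -
    have c: "\<rho> g \<in> carrier_mat n n" "\<sigma> g \<in> carrier_mat n n" "\<tau> g \<in> carrier_mat n n"
      using rep_carrier[OF r g] rep_carrier[OF s g] rep_carrier[OF t g] by auto
    have "Q * P * \<rho> g = Q * (P * \<rho> g)" using c P(1) Q(1) by simp
    also have "\<dots> = Q * (\<sigma> g * P)" using P(3) g by simp
    also have "\<dots> = (Q * \<sigma> g) * P" using c P(1) Q(1) by simp
    also have "\<dots> = (\<tau> g * Q) * P" using Q(3) g by simp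
    also have "\<dots> = \<tau> g * (Q * P)" using c P(1) Q(1) by simp
    finally show ?thesis .
  qed
  moreover have "invertible_mat (Q * P)"
    using inj_sq_invertible[of "Q * P" n] inj_mult[OF Q(1) P(1) invertible_inj[OF Q(1,2)] invertible_inj[OF P(1,2)]] P(1) Q(1)
    by simp
  ultimately show ?thesis unfolding rep_iso_def using P(1) Q(1) by auto
qed

lemma sum_split_add: "(\<Sum>k\<in>{0..<a+b}. f k) = (\<Sum>k\<in>{0..<a}. f k) + (\<Sum>k\<in>{0..<b}. f (a+k :: nat))"
proof -
  have "(\<Sum>k\<in>{0..<a+b}. f k) = (\<Sum>k\<in>{0..<a}. f k) + (\<Sum>k\<in>{a..<a+b}. f k)"
    by (rule sum.atLeastLessThan_concat[symmetric]) auto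
  also have "(\<Sum>k\<in>{a..<a+b}. f k) = (\<Sum>k\<in>{0..<b}. f (a+k))"
    using sum.shift_bounds_nat_ivl[of f 0 a b] by (simp add: add.commute)
  finally show ?thesis .
qed

definition hcat :: "complex mat \<Rightarrow> complex mat \<Rightarrow> complex mat" where
  "hcat A B = mat (dim_row A) (dim_col A + dim_col B) (\<lambda>(i,j). if j < dim_col A then A $$ (i,j) else B $$ (i, j - dim_col A))"
definition vtop :: "complex mat \<Rightarrow> nat \<Rightarrow> complex mat" where
  "vtop C a = mat a (dim_col C) (\<lambda>(i,j). C $$ (i,j))"
definition vbot :: "complex mat \<Rightarrow> nat \<Rightarrow> complex mat" where
  "vbot C a = mat (dim_row C - a) (dim_col C) (\<lambda>(i,j). C $$ (a + i,j))"
definition dg :: "complex mat \<Rightarrow> complex mat \<Rightarrow> complex mat" where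
  "dg P Q = mat (dim_row P + dim_row Q) (dim_col P + dim_col Q) (\<lambda>(i,j).
     if i < dim_row P then (if j < dim_col P then P $$ (i,j) else 0)
     else (if j < dim_col P then 0 else Q $$ (i - dim_row P, j - dim_col P)))"

lemma blk_dims[simp]:
  "dim_row (vtop C a) = a" "dim_col (vtop C a) = dim_col C"
  "dim_row (vbot C a) = dim_row C - a" "dim_col (vbot C a) = dim_col C"
  "dim_row (hcat A B) = dim_row A" "dim_col (hcat A B) = dim_col A + dim_col B"
  "dim_row (dg P Q) = dim_row P + dim_row Q" "dim_col (dg P Q) = dim_col P + dim_col Q"
  unfolding vtop_def vbot_def hcat_def dg_def by auto

lemma hcat_carrier[simp]: "A \<in> carrier_mat N a \<Longrightarrow> B \<in> carrier_mat N b \<Longrightarrow> hcat A B \<in> carrier_mat N (a + b)"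
  unfolding hcat_def by auto
lemma vtop_carrier[simp]: "C \<in> carrier_mat (a + b) e \<Longrightarrow> vtop C a \<in> carrier_mat a e"
  unfolding vtop_def by auto
lemma vbot_carrier[simp]: "C \<in> carrier_mat (a + b) e \<Longrightarrow> vbot C a \<in> carrier_mat b e"
  unfolding vbot_def by auto
lemma dg_carrier[simp]: "P \<in> carrier_mat a a \<Longrightarrow> Q \<in> carrier_mat b b \<Longrightarrow> dg P Q \<in> carrier_mat (a + b) (a + b)"
  unfolding dg_def by auto

lemma hcat_mult:
  assumes A: "A \<in> carrier_mat N a" and B: "B \<in> carrier_mat N b" and C: "C \<in> carrier_mat (a + b) e"
  shows "hcat A B * C = A * vtop C a + B * vbot C a"
proof (rule eq_matI)
  fix i j assume i: "i < dim_row (A * vtop C a + B * vbot C a)" and j: "j < dim_col (A * vtop C a + B * vbot C a)"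
  have i': "i < N" and j': "j < e" using i j A B C by auto
  show "(hcat A B * C) $$ (i, j) = (A * vtop C a + B * vbot C a) $$ (i, j)"
    using i' j' A B C unfolding hcat_def vtop_def vbot_def
    by (simp add: row_def col_def scalar_prod_def sum_split_add)
qed (use A B C in auto)

lemma vtop_mult: assumes C: "C \<in> carrier_mat (a + b) e" and T: "T \<in> carrier_mat e f"
  shows "vtop (C * T) a = vtop C a * T"
  by (rule eq_matI) (use C T in \<open>auto simp: vtop_def row_def col_def scalar_prod_def\<close>)

lemma vbot_mult: assumes C: "C \<in> carrier_mat (a + b) e" and T: "T \<in> carrier_mat e f"
  shows "vbot (C * T) a = vbot C a * T"
  by (rule eq_matI) (use C T in \<open>auto simp: vbot_def row_def col_def scalar_prod_def\<close>)

lemma vtop_dg: assumes P: "P \<in> carrier_mat a a" and Q: "Q \<in> carrier_mat b b" and C: "C \<in> carrier_mat (a + b) e"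
  shows "vtop (dg P Q * C) a = P * vtop C a"
proof (rule eq_matI)
  fix i j assume i: "i < dim_row (P * vtop C a)" and j: "j < dim_col (P * vtop C a)"
  have i': "i < a" and j': "j < e" using i j P C by auto
  show "vtop (dg P Q * C) a $$ (i, j) = (P * vtop C a) $$ (i, j)"
    using i' j' P Q C unfolding dg_def vtop_def
    by (simp add: row_def col_def scalar_prod_def sum_split_add)
qed (use P Q C in auto)

lemma vbot_dg: assumes P: "P \<in> carrier_mat a a" and Q: "Q \<in> carrier_mat b b" and C: "C \<in> carrier_mat (a + b) e"
  shows "vbot (dg P Q * C) a = Q * vbot C a"
proof (rule eq_matI)
  fix i j assume i: "i < dim_row (Q * vbot C a)" and j: "j < dim_col (Q * vbot C a)"
  have i': "i < b" and j': "j < e" using i j Q C by auto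
  show "vbot (dg P Q * C) a $$ (i, j) = (Q * vbot C a) $$ (i, j)"
    using i' j' P Q C unfolding dg_def vbot_def
    by (simp add: row_def col_def scalar_prod_def sum_split_add)
qed (use P Q C in auto)

lemma mult_hcat: assumes M: "M \<in> carrier_mat N N" and A: "A \<in> carrier_mat N a" and B: "B \<in> carrier_mat N b"
  shows "M * hcat A B = hcat (M * A) (M * B)"
  by (rule eq_matI) (use M A B in \<open>auto simp: hcat_def row_def col_def scalar_prod_def\<close>)

lemma hcat_dg: assumes A: "A \<in> carrier_mat N a" and B: "B \<in> carrier_mat N b"
  and P: "P \<in> carrier_mat a a" and Q: "Q \<in> carrier_mat b b"
  shows "hcat A B * dg P Q = hcat (A * P) (B * Q)"
proof (rule eq_matI)
  fix i j assume i: "i < dim_row (hcat (A * P) (B * Q))" and j: "j < dim_col (hcat (A * P) (B * Q))"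
  have i': "i < N" and j': "j < a + b" using i j A B P Q by auto
  show "(hcat A B * dg P Q) $$ (i, j) = hcat (A * P) (B * Q) $$ (i, j)"
    using i' j' A B P Q unfolding hcat_def dg_def
    by (auto simp: row_def col_def scalar_prod_def sum_split_add)
qed (use A B P Q in auto)

lemma dg_mult: assumes P: "P \<in> carrier_mat a a" and Q: "Q \<in> carrier_mat b b"
  and P': "P' \<in> carrier_mat a a" and Q': "Q' \<in> carrier_mat b b"
  shows "dg P Q * dg P' Q' = dg (P * P') (Q * Q')"
proof (rule eq_matI)
  fix i j assume i: "i < dim_row (dg (P * P') (Q * Q'))" and j: "j < dim_col (dg (P * P') (Q * Q'))"
  have i': "i < a + b" and j': "j < a + b" using i j P Q P' Q' unfolding dg_def by auto
  show "(dg P Q * dg P' Q') $$ (i, j) = dg (P * P') (Q * Q') $$ (i, j)"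
    using i' j' P Q P' Q' unfolding dg_def
    by (auto simp: row_def col_def scalar_prod_def sum_split_add)
qed (use P Q P' Q' in \<open>auto simp: dg_def\<close>)

lemma dg_one: "dg (1\<^sub>m a) (1\<^sub>m b) = 1\<^sub>m (a + b)"
  by (rule eq_matI) (auto simp: dg_def)

lemma split_zero:
  assumes C: "C \<in> carrier_mat (a + b) e" and t: "vtop C a = 0\<^sub>m a e" and bo: "vbot C a = 0\<^sub>m b e"
  shows "C = 0\<^sub>m (a + b) e"
proof (rule eq_matI)
  fix i j assume i: "i < dim_row (0\<^sub>m (a + b) e :: complex mat)" and j: "j < dim_col (0\<^sub>m (a + b) e :: complex mat)"
  show "C $$ (i, j) = 0\<^sub>m (a + b) e $$ (i, j)"
  proof (cases "i < a")
    case True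
    then have "vtop C a $$ (i,j) = 0" using t j by simp
    then show ?thesis using True C i j unfolding vtop_def by simp
  next
    case False
    then have "vbot C a $$ (i - a,j) = 0" using bo i j by simp
    then show ?thesis using False C i j unfolding vbot_def by simp
  qed
qed (use C in auto)

lemma zero_rows_eq: "Z \<in> carrier_mat 0 e \<Longrightarrow> Z = (0\<^sub>m 0 e :: complex mat)"
  by (intro eq_matI) auto

lemma DS_aux:
  fixes \<Gamma> :: "('g,'b) monoid_scheme" and d :: "'i \<Rightarrow> nat" and \<pi> :: "'i \<Rightarrow> 'g \<Rightarrow> complex mat"
    and A :: "'i \<Rightarrow> complex mat"
  assumes G: "group \<Gamma>" and psi: "is_rep \<Gamma> M \<psi>"
    and irr: "\<And>i. i \<in> I \<Longrightarrow> is_irrep \<Gamma> (d i) (\<pi> i)"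
    and Ai: "\<And>i. i \<in> I \<Longrightarrow> intw \<Gamma> (d i) (\<pi> i) M \<psi> (A i)"
    and injA: "\<And>i. i \<in> I \<Longrightarrow> inj_mat (A i)"
    and dist: "\<And>i j X. i \<in> I \<Longrightarrow> j \<in> I \<Longrightarrow> i \<noteq> j \<Longrightarrow> intw \<Gamma> (d i) (\<pi> i) (d j) (\<pi> j) X \<Longrightarrow> X = 0\<^sub>m (d j) (d i)"
    and F: "finite F" "F \<subseteq> I"
  shows "\<exists>S Ac. is_rep \<Gamma> (sum d F) S \<and> intw \<Gamma> (sum d F) S M \<psi> Ac \<and> inj_mat Ac \<and>
     (\<forall>e \<tau> Z. is_irrep \<Gamma> e \<tau> \<longrightarrow> intw \<Gamma> e \<tau> (sum d F) S Z \<longrightarrow> Z \<noteq> 0\<^sub>m (sum d F) e \<longrightarrow>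
        (\<exists>i\<in>F. \<exists>Y. intw \<Gamma> e \<tau> (d i) (\<pi> i) Y \<and> Y \<noteq> 0\<^sub>m (d i) e))"
  using F
proof (induction F rule: finite_induct)
  case empty
  define S where "S = (\<lambda>g::'g. 1\<^sub>m 0 :: complex mat)"
  show ?case
  proof (intro exI[of _ S] exI[of _ "0\<^sub>m M 0"] conjI allI impI)
    show "is_rep \<Gamma> (sum d {}) S" unfolding is_rep_def S_def by simp
    show "intw \<Gamma> (sum d {}) S M \<psi> (0\<^sub>m M 0)" unfolding intw_def S_def
    proof (intro conjI ballI)
      show "0\<^sub>m M 0 \<in> carrier_mat M (sum d {})" by simp
      fix g assume g: "g \<in> carrier \<Gamma>"
      have "\<psi> g \<in> carrier_mat M M" using rep_carrier[OF psi g] .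
      then show "0\<^sub>m M 0 * 1\<^sub>m 0 = \<psi> g * 0\<^sub>m M 0" by (intro eq_matI) auto
    qed
    show "inj_mat (0\<^sub>m M 0)" unfolding inj_mat_def using carrier_vec_0_eq by auto
    fix e \<tau> Z assume "intw \<Gamma> e \<tau> (sum d {}) S Z" "Z \<noteq> 0\<^sub>m (sum d {}) e"
    then show "\<exists>i\<in>{}. \<exists>Y. intw \<Gamma> e \<tau> (d i) (\<pi> i) Y \<and> Y \<noteq> 0\<^sub>m (d i) e"
      using zero_rows_eq intw_carrier by fastforce
  qed
next
  case (insert x F)
  have xI: "x \<in> I" and FI: "F \<subseteq> I" using insert.prems by auto
  obtain S' A' where IH: "is_rep \<Gamma> (sum d F) S'" "intw \<Gamma> (sum d F) S' M \<psi> A'" "inj_mat A'"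
    "\<And>e \<tau> Z. is_irrep \<Gamma> e \<tau> \<Longrightarrow> intw \<Gamma> e \<tau> (sum d F) S' Z \<Longrightarrow> Z \<noteq> 0\<^sub>m (sum d F) e \<Longrightarrow>
        (\<exists>i\<in>F. \<exists>Y. intw \<Gamma> e \<tau> (d i) (\<pi> i) Y \<and> Y \<noteq> 0\<^sub>m (d i) e)"
    using insert.IH[OF FI] by blast
  define D' where "D' = sum d F"
  have sd: "sum d (insert x F) = d x + D'" unfolding D'_def using insert.hyps by simp
  define S where "S = (\<lambda>g. dg (\<pi> x g) (S' g))"
  define Ac where "Ac = hcat (A x) A'"
  have rx: "is_rep \<Gamma> (d x) (\<pi> x)" using irrep_rep[OF irr[OF xI]] .
  have Axc: "A x \<in> carrier_mat M (d x)" using intw_carrier[OF Ai[OF xI]] .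
  have A'c: "A' \<in> carrier_mat M D'" using intw_carrier[OF IH(2)] unfolding D'_def .
  have Acc: "Ac \<in> carrier_mat M (d x + D')" unfolding Ac_def using Axc A'c by simp
  have pxc: "\<pi> x g \<in> carrier_mat (d x) (d x)" if "g \<in> carrier \<Gamma>" for g using rep_carrier[OF rx that] .
  have S'c: "S' g \<in> carrier_mat D' D'" if "g \<in> carrier \<Gamma>" for g using rep_carrier[OF IH(1) that] unfolding D'_def .
  have repS: "is_rep \<Gamma> (d x + D') S" unfolding is_rep_def
  proof (intro conjI ballI)
    fix g assume g: "g \<in> carrier \<Gamma>"
    show "S g \<in> carrier_mat (d x + D') (d x + D')" unfolding S_def using pxc[OF g] S'c[OF g] by simp
  next
    fix g h assume g: "g \<in> carrier \<Gamma>" and h: "h \<in> carrier \<Gamma>"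
    show "S (g \<otimes>\<^bsub>\<Gamma>\<^esub> h) = S g * S h" unfolding S_def
      using rep_mult[OF rx g h] rep_mult[OF IH(1) g h] dg_mult[OF pxc[OF g] S'c[OF g] pxc[OF h] S'c[OF h]] by simp
  next
    show "S \<one>\<^bsub>\<Gamma>\<^esub> = 1\<^sub>m (d x + D')" unfolding S_def using rep_one[OF rx] rep_one[OF IH(1)] dg_one
      unfolding D'_def by simp
  qed
  have intwAc: "intw \<Gamma> (d x + D') S M \<psi> Ac" unfolding intw_def
  proof (intro conjI ballI Acc)
    fix g assume g: "g \<in> carrier \<Gamma>"
    have "Ac * S g = hcat (A x * \<pi> x g) (A' * S' g)" unfolding Ac_def S_def
      using hcat_dg[OF Axc A'c pxc[OF g] S'c[OF g]] .
    also have "\<dots> = hcat (\<psi> g * A x) (\<psi> g * A')" using intw_eq[OF Ai[OF xI] g] intw_eq[OF IH(2) g] by simp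
    also have "\<dots> = \<psi> g * Ac" unfolding Ac_def using mult_hcat[OF rep_carrier[OF psi g] Axc A'c] by simp
    finally show "Ac * S g = \<psi> g * Ac" .
  qed
  have split_intw: "intw \<Gamma> e \<tau> (d x) (\<pi> x) (vtop Z (d x)) \<and> intw \<Gamma> e \<tau> D' S' (vbot Z (d x))"
    if t: "is_rep \<Gamma> e \<tau>" and Z: "intw \<Gamma> e \<tau> (d x + D') S Z" for e \<tau> Z
  proof -
    have Zc: "Z \<in> carrier_mat (d x + D') e" using intw_carrier[OF Z] .
    have a: "vtop Z (d x) * \<tau> g = \<pi> x g * vtop Z (d x)" if g: "g \<in> carrier \<Gamma>" for g
    proof -
      have "vtop Z (d x) * \<tau> g = vtop (Z * \<tau> g) (d x)" using vtop_mult[OF Zc rep_carrier[OF t g]] by simp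
      also have "\<dots> = vtop (S g * Z) (d x)" using intw_eq[OF Z g] by simp
      also have "\<dots> = \<pi> x g * vtop Z (d x)" unfolding S_def using vtop_dg[OF pxc[OF g] S'c[OF g] Zc] .
      finally show ?thesis .
    qed
    have b: "vbot Z (d x) * \<tau> g = S' g * vbot Z (d x)" if g: "g \<in> carrier \<Gamma>" for g
    proof -
      have "vbot Z (d x) * \<tau> g = vbot (Z * \<tau> g) (d x)" using vbot_mult[OF Zc rep_carrier[OF t g]] by simp
      also have "\<dots> = vbot (S g * Z) (d x)" using intw_eq[OF Z g] by simp
      also have "\<dots> = S' g * vbot Z (d x)" unfolding S_def using vbot_dg[OF pxc[OF g] S'c[OF g] Zc] .
      finally show ?thesis .
    qed
    show ?thesis unfolding intw_def using a b Zc by auto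
  qed
  have injAc: "inj_mat Ac"
  proof (rule ccontr)
    assume ni: "\<not> inj_mat Ac"
    let ?K = "{v\<in>carrier_vec (d x + D'). Ac *\<^sub>v v = 0\<^sub>v M}"
    have invK: "invar \<Gamma> (d x + D') S ?K" using ker_invar[OF repS psi intwAc] .
    obtain v where v: "v \<in> carrier_vec (d x + D')" "Ac *\<^sub>v v = 0\<^sub>v M" "v \<noteq> 0\<^sub>v (d x + D')"
      using ni Acc unfolding inj_mat_def by auto
    have "?K \<noteq> {0\<^sub>v (d x + D')}" using v by blast
    then obtain e \<tau> C where C: "is_irrep \<Gamma> e \<tau>" "C \<in> carrier_mat (d x + D') e" "inj_mat C" "img C \<subseteq> ?K"
      "intw \<Gamma> e \<tau> (d x + D') S C"
      using extract_irrep[OF repS invK] by blast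
    have e0: "e > 0" using irrep_pos[OF C(1)] .
    have ACz: "Ac * C = 0\<^sub>m M e"
    proof (rule mat_eq_by_vec[of _ M e])
      show "Ac * C \<in> carrier_mat M e" using Acc C(2) by simp
      fix u :: "complex vec" assume u: "u \<in> carrier_vec e"
      have "C *\<^sub>v u \<in> img C" unfolding img_def using u C(2) by auto
      hence "Ac *\<^sub>v (C *\<^sub>v u) = 0\<^sub>v M" using C(4) by auto
      then show "(Ac * C) *\<^sub>v u = 0\<^sub>m M e *\<^sub>v u" using Acc C(2) u by simp
    qed simp
    define C1 where "C1 = vtop C (d x)"
    define C2 where "C2 = vbot C (d x)"
    have C1c: "C1 \<in> carrier_mat (d x) e" unfolding C1_def using C(2) by simp
    have C2c: "C2 \<in> carrier_mat D' e" unfolding C2_def using C(2) by simp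
    have iC1: "intw \<Gamma> e \<tau> (d x) (\<pi> x) C1" and iC2: "intw \<Gamma> e \<tau> D' S' C2"
      using split_intw[OF irrep_rep[OF C(1)] C(5)] unfolding C1_def C2_def by auto
    have sumz: "A x * C1 + A' * C2 = 0\<^sub>m M e"
      using ACz hcat_mult[OF Axc A'c C(2)] unfolding Ac_def C1_def C2_def by simp
    have Cnz: "C \<noteq> 0\<^sub>m (d x + D') e" using inj_nonzero[OF C(2,3) e0] .
    show False
    proof (cases "C1 = 0\<^sub>m (d x) e")
      case True
      hence "A' * C2 = 0\<^sub>m M e" using sumz right_mult_zero_mat[OF Axc] A'c C2c by simp
      moreover have "C2 \<noteq> 0\<^sub>m D' e" using split_zero[OF C(2)] True Cnz unfolding C1_def C2_def by auto
      ultimately show False using inj_mult_nonzero[OF A'c C2c IH(3)] by simp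
    next
      case False
      have sch: "e = d x \<and> (\<tau>, \<pi> x) \<in> rep_iso \<Gamma> e" using schur[OF C(1) irr[OF xI] iC1 False] by auto
      have C2nz: "C2 \<noteq> 0\<^sub>m D' e"
      proof
        assume "C2 = 0\<^sub>m D' e"
        hence "A x * C1 = 0\<^sub>m M e" using sumz right_mult_zero_mat[OF A'c] Axc C1c by simp
        then show False using inj_mult_nonzero[OF Axc C1c injA[OF xI] False] by simp
      qed
      obtain i Y where iY: "i \<in> F" "intw \<Gamma> e \<tau> (d i) (\<pi> i) Y" "Y \<noteq> 0\<^sub>m (d i) e"
        using IH(4)[OF C(1) iC2[unfolded D'_def] C2nz[unfolded D'_def]] by blast
      have iI: "i \<in> I" using iY(1) FI by auto
      have "(\<pi> x, \<tau>) \<in> rep_iso \<Gamma> (d x)"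
        using rep_iso_sym[of \<tau> "\<pi> x" \<Gamma> "d x"] sch irrep_rep[OF C(1)] rx by auto
      then obtain P where P: "P \<in> carrier_mat (d x) (d x)" "invertible_mat P" "\<forall>g\<in>carrier \<Gamma>. P * \<pi> x g = \<tau> g * P"
        unfolding rep_iso_def by auto
      have Yc: "Y \<in> carrier_mat (d i) (d x)" using intw_carrier[OF iY(2)] sch by simp
      have tc: "\<tau> g \<in> carrier_mat (d x) (d x)" if "g \<in> carrier \<Gamma>" for g
        using rep_carrier[OF irrep_rep[OF C(1)] that] sch by simp
      have "intw \<Gamma> (d x) (\<pi> x) (d i) (\<pi> i) (Y * P)" unfolding intw_def
      proof (intro conjI ballI)
        show "Y * P \<in> carrier_mat (d i) (d x)" using Yc P(1) by simp
        fix g assume g: "g \<in> carrier \<Gamma>"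
        have pic: "\<pi> i g \<in> carrier_mat (d i) (d i)" using rep_carrier[OF irrep_rep[OF irr[OF iI]] g] .
        have "Y * P * \<pi> x g = Y * (P * \<pi> x g)" using Yc P(1) pxc[OF g] by simp
        also have "\<dots> = Y * (\<tau> g * P)" using P(3) g by simp
        also have "\<dots> = (Y * \<tau> g) * P" using Yc P(1) tc[OF g] by simp
        also have "\<dots> = (\<pi> i g * Y) * P" using intw_eq[OF iY(2) g] by simp
        also have "\<dots> = \<pi> i g * (Y * P)" using Yc P(1) pic by simp
        finally show "Y * P * \<pi> x g = \<pi> i g * (Y * P)" .
      qed
      moreover have "Y * P \<noteq> 0\<^sub>m (d i) (d x)"
      proof -
        have "inj_mat Y" using irr_inj[OF C(1) irrep_rep[OF irr[OF iI]] iY(2) iY(3)] .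
        hence "inj_mat (Y * P)" using inj_mult[OF Yc P(1)] invertible_inj[OF P(1,2)] by simp
        then show ?thesis using inj_nonzero[of "Y * P" "d i" "d x"] Yc P(1) irrep_pos[OF irr[OF xI]] by simp
      qed
      moreover have "x \<noteq> i" using insert.hyps(2) iY(1) by auto
      ultimately show False using dist[OF xI iI] by blast
    qed
  qed
  show ?case unfolding sd
  proof (intro exI[of _ S] exI[of _ Ac] conjI allI impI repS intwAc injAc)
    fix e \<tau> Z assume t: "is_irrep \<Gamma> e \<tau>" and Z: "intw \<Gamma> e \<tau> (d x + D') S Z" and nz: "Z \<noteq> 0\<^sub>m (d x + D') e"
    have Zc: "Z \<in> carrier_mat (d x + D') e" using intw_carrier[OF Z] .
    have s: "intw \<Gamma> e \<tau> (d x) (\<pi> x) (vtop Z (d x))" "intw \<Gamma> e \<tau> D' S' (vbot Z (d x))"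
      using split_intw[OF irrep_rep[OF t] Z] by auto
    show "\<exists>i\<in>insert x F. \<exists>Y. intw \<Gamma> e \<tau> (d i) (\<pi> i) Y \<and> Y \<noteq> 0\<^sub>m (d i) e"
    proof (cases "vtop Z (d x) = 0\<^sub>m (d x) e")
      case True
      hence "vbot Z (d x) \<noteq> 0\<^sub>m D' e" using split_zero[OF Zc] nz by auto
      then show ?thesis using IH(4)[OF t s(2)[unfolded D'_def]] unfolding D'_def by auto
    next
      case False
      then show ?thesis using s(1) by auto
    qed
  qed
qed

lemma DS:
  fixes \<Gamma> :: "('g,'b) monoid_scheme" and d :: "'i \<Rightarrow> nat" and \<pi> :: "'i \<Rightarrow> 'g \<Rightarrow> complex mat"
    and A :: "'i \<Rightarrow> complex mat"
  assumes G: "group \<Gamma>" and psi: "is_rep \<Gamma> M \<psi>"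
    and irr: "\<And>i. i \<in> I \<Longrightarrow> is_irrep \<Gamma> (d i) (\<pi> i)"
    and Ai: "\<And>i. i \<in> I \<Longrightarrow> intw \<Gamma> (d i) (\<pi> i) M \<psi> (A i)"
    and injA: "\<And>i. i \<in> I \<Longrightarrow> inj_mat (A i)"
    and dist: "\<And>i j X. i \<in> I \<Longrightarrow> j \<in> I \<Longrightarrow> i \<noteq> j \<Longrightarrow> intw \<Gamma> (d i) (\<pi> i) (d j) (\<pi> j) X \<Longrightarrow> X = 0\<^sub>m (d j) (d i)"
    and F: "finite I"
  shows "sum d I \<le> M"
proof -
  obtain S Ac where "intw \<Gamma> (sum d I) S M \<psi> Ac" "inj_mat Ac"
    using DS_aux[where \<Gamma>=\<Gamma> and M=M and \<psi>=\<psi> and I=I and d=d and \<pi>=\<pi> and A=A and F=I,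
      OF G psi irr Ai injA dist F subset_refl] by blast
  then show ?thesis using inj_dim intw_carrier by blast
qed

lemma sum_blocks: "(\<Sum>s\<in>{0..<k*d}. f s) = (\<Sum>l<k. \<Sum>e<d. f (l*d + e :: nat))"
proof (induction k)
  case 0 then show ?case by simp
next
  case (Suc k)
  have "(\<Sum>s\<in>{0..<Suc k * d}. f s) = (\<Sum>s\<in>{0..<k*d + d}. f s)" by (simp add: add.commute)
  also have "\<dots> = (\<Sum>s\<in>{0..<k*d}. f s) + (\<Sum>e\<in>{0..<d}. f (k*d + e))" by (rule sum_split_add)
  also have "\<dots> = (\<Sum>l<Suc k. \<Sum>e<d. f (l*d + e))" using Suc by (simp add: lessThan_atLeast0)
  finally show ?case .
qed

lemma blk_div: "a < (d::nat) \<Longrightarrow> (i*d + a) div d = i" by simp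
lemma blk_mod: "a < (d::nat) \<Longrightarrow> (i*d + a) mod d = a" by simp
lemma blk_decomp: "r < k * (d::nat) \<Longrightarrow> r = (r div d) * d + r mod d \<and> r div d < k \<and> r mod d < d"
  by (metis div_mult_mod_eq less_mult_imp_div_less mod_less_divisor mult.commute mult_zero_right
      not_gr_zero not_less_zero)

lemma blk_lt: assumes "i < k" "a < (d::nat)" shows "i*d + a < k*d"
proof -
  have "i*d + a < Suc i * d" using assms by simp
  also have "\<dots> \<le> k * d" using assms by (intro mult_le_mono1) simp
  finally show ?thesis .
qed

locale fi = group G + subgroup H G for G :: "('g,'b) monoid_scheme" (structure) and H :: "'g set" +
  fixes k :: nat and t :: "nat \<Rightarrow> 'g" and i0 :: nat
  assumes t_car: "\<And>i. i < k \<Longrightarrow> t i \<in> carrier G"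
    and i0: "i0 < k" and ti0: "t i0 = \<one>"
    and cov: "\<And>g. g \<in> carrier G \<Longrightarrow> \<exists>!j. j < k \<and> g \<otimes> inv (t j) \<in> H"
begin

definition idx :: "'g \<Rightarrow> nat" where "idx g = (THE j. j < k \<and> g \<otimes> inv (t j) \<in> H)"

lemma idx: "g \<in> carrier G \<Longrightarrow> idx g < k \<and> g \<otimes> inv (t (idx g)) \<in> H"
  unfolding idx_def using theI'[OF cov] by blast

lemma idx_unique: "g \<in> carrier G \<Longrightarrow> l < k \<Longrightarrow> g \<otimes> inv (t l) \<in> H \<Longrightarrow> l = idx g"
  using cov idx by blast

lemma inv_cancel_left: "a \<in> carrier G \<Longrightarrow> b \<in> carrier G \<Longrightarrow> inv a \<otimes> (a \<otimes> b) = b"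
  by (simp add: m_assoc[symmetric])

definition Ind :: "nat \<Rightarrow> ('g \<Rightarrow> complex mat) \<Rightarrow> 'g \<Rightarrow> complex mat" where
  "Ind d \<sigma> g = mat (k*d) (k*d) (\<lambda>(r,c).
     if t (r div d) \<otimes> g \<otimes> inv (t (c div d)) \<in> H
     then \<sigma> (t (r div d) \<otimes> g \<otimes> inv (t (c div d))) $$ (r mod d, c mod d) else 0)"

lemma Ind_carrier[simp]: "Ind d \<sigma> g \<in> carrier_mat (k*d) (k*d)"
  unfolding Ind_def by simp

lemma Ind_dims[simp]: "dim_row (Ind d \<sigma> g) = k*d" "dim_col (Ind d \<sigma> g) = k*d"
  unfolding Ind_def by simp_all

lemma Ind_entry:
  assumes "i < k" "a < d" "l < k" "e < d"
  shows "Ind d \<sigma> g $$ (i*d+a, l*d+e) = (if t i \<otimes> g \<otimes> inv (t l) \<in> H then \<sigma> (t i \<otimes> g \<otimes> inv (t l)) $$ (a, e) else 0)"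
proof -
  have "i*d+a < k*d" "l*d+e < k*d" using assms blk_lt by auto
  then show ?thesis unfolding Ind_def using assms by simp
qed

lemma Ind_mult_entry:
  assumes g: "g \<in> carrier G" and i: "i < k" and a: "a < d" and M: "M \<in> carrier_mat (k*d) n" and c: "c < n"
  shows "(Ind d \<sigma> g * M) $$ (i*d+a, c) =
    (\<Sum>e<d. \<sigma> (t i \<otimes> g \<otimes> inv (t (idx (t i \<otimes> g)))) $$ (a, e) * M $$ (idx (t i \<otimes> g) * d + e, c))"
proof -
  let ?j = "idx (t i \<otimes> g)"
  have tig: "t i \<otimes> g \<in> carrier G" using t_car[OF i] g by simp
  have j: "?j < k" "t i \<otimes> g \<otimes> inv (t ?j) \<in> H" using idx[OF tig] by auto
  have r: "i*d+a < k*d" using blk_lt[OF i a] .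
  have "(Ind d \<sigma> g * M) $$ (i*d+a, c) = (\<Sum>s\<in>{0..<k*d}. Ind d \<sigma> g $$ (i*d+a, s) * M $$ (s, c))"
    using r M c by (simp add: scalar_prod_def row_def col_def)
  also have "\<dots> = (\<Sum>l<k. \<Sum>e<d. Ind d \<sigma> g $$ (i*d+a, l*d+e) * M $$ (l*d+e, c))" by (rule sum_blocks)
  also have "\<dots> = (\<Sum>l<k. if l = ?j then (\<Sum>e<d. \<sigma> (t i \<otimes> g \<otimes> inv (t l)) $$ (a, e) * M $$ (l*d+e, c)) else 0)"
  proof (rule sum.cong[OF refl])
    fix l assume l: "l \<in> {..<k}"
    show "(\<Sum>e<d. Ind d \<sigma> g $$ (i*d+a, l*d+e) * M $$ (l*d+e, c)) =
      (if l = ?j then (\<Sum>e<d. \<sigma> (t i \<otimes> g \<otimes> inv (t l)) $$ (a, e) * M $$ (l*d+e, c)) else 0)"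
    proof (cases "l = ?j")
      case True
      then show ?thesis using Ind_entry[OF i a, of l] l j by simp
    next
      case False
      then have "t i \<otimes> g \<otimes> inv (t l) \<notin> H" using idx_unique[OF tig, of l] l by auto
      then show ?thesis using Ind_entry[OF i a, of l] l False by simp
    qed
  qed
  also have "\<dots> = (\<Sum>e<d. \<sigma> (t i \<otimes> g \<otimes> inv (t ?j)) $$ (a, e) * M $$ (?j*d+e, c))"
    using j(1) by (simp add: sum.delta)
  finally show ?thesis .
qed

lemma blk_obtain:
  assumes "r < k * d"
  obtains i a where "r = i*d + a" "i < k" "a < d"
proof -
  have "r = (r div d) * d + r mod d \<and> r div d < k \<and> r mod d < d" using blk_decomp[OF assms] .
  then show thesis using that[of "r div d" "r mod d"] by blast
qed

lemma HG_simps[simp]: "carrier (G\<lparr>carrier := H\<rparr>) = H" "mult (G\<lparr>carrier := H\<rparr>) = mult G"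
  "one (G\<lparr>carrier := H\<rparr>) = one G"
  by simp_all

lemma Ind_rep:
  assumes s: "is_rep (G\<lparr>carrier := H\<rparr>) d \<sigma>"
  shows "is_rep G (k*d) (Ind d \<sigma>)"
  unfolding is_rep_def
proof (intro conjI ballI)
  have sc: "\<sigma> x \<in> carrier_mat d d" if "x \<in> H" for x using rep_carrier[OF s] that by simp
  have sm: "\<sigma> (x \<otimes> y) = \<sigma> x * \<sigma> y" if "x \<in> H" "y \<in> H" for x y using rep_mult[OF s] that by simp
  have s1: "\<sigma> \<one> = 1\<^sub>m d" using rep_one[OF s] by simp
  fix g h assume g: "g \<in> carrier G" and h: "h \<in> carrier G"
  show "Ind d \<sigma> (g \<otimes> h) = Ind d \<sigma> g * Ind d \<sigma> h"
  proof (rule eq_matI)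
    fix r c assume r: "r < dim_row (Ind d \<sigma> g * Ind d \<sigma> h)" and c: "c < dim_col (Ind d \<sigma> g * Ind d \<sigma> h)"
    have rk: "r < k * d" using r by simp
    obtain i a where ia: "r = i*d + a" "i < k" "a < d" by (rule blk_obtain[OF rk])
    have ck: "c < k * d" using c by simp
    obtain j b where jb: "c = j*d + b" "j < k" "b < d" by (rule blk_obtain[OF ck])
    have ti: "t i \<in> carrier G" and tj: "t j \<in> carrier G" using t_car ia jb by auto
    have tig: "t i \<otimes> g \<in> carrier G" using ti g by simp
    define j0 where "j0 = idx (t i \<otimes> g)"
    have j0: "j0 < k" "t i \<otimes> g \<otimes> inv (t j0) \<in> H" using idx[OF tig] unfolding j0_def by auto
    have tj0: "t j0 \<in> carrier G" using t_car j0 by auto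
    define x where "x = t i \<otimes> g \<otimes> inv (t j0)"
    define y where "y = t j0 \<otimes> h \<otimes> inv (t j)"
    define z where "z = t i \<otimes> (g \<otimes> h) \<otimes> inv (t j)"
    have xH: "x \<in> H" using j0(2) unfolding x_def .
    have xc: "x \<in> carrier G" and yc: "y \<in> carrier G" unfolding x_def y_def using ti tj tj0 g h by auto
    have xyz: "x \<otimes> y = z" unfolding x_def y_def z_def using ti tj tj0 g h by (simp add: m_assoc inv_cancel_left)
    have zc: "z \<in> carrier G" unfolding z_def using ti tj g h by simp
    have yz: "y = inv x \<otimes> z" using xyz[symmetric] inv_cancel_left[OF xc yc] by simp
    have prod: "(Ind d \<sigma> g * Ind d \<sigma> h) $$ (r, c) = (\<Sum>e<d. \<sigma> x $$ (a, e) * Ind d \<sigma> h $$ (j0*d + e, j*d + b))"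
      unfolding ia(1) jb(1) x_def j0_def using Ind_mult_entry[OF g ia(2,3) Ind_carrier, of "j*d+b"] blk_lt[OF jb(2,3)] by simp
    show "Ind d \<sigma> (g \<otimes> h) $$ (r, c) = (Ind d \<sigma> g * Ind d \<sigma> h) $$ (r, c)"
    proof (cases "y \<in> H")
      case True
      have zH: "z \<in> H" using xyz xH True by auto
      have "(\<Sum>e<d. \<sigma> x $$ (a, e) * Ind d \<sigma> h $$ (j0*d + e, j*d + b)) = (\<Sum>e<d. \<sigma> x $$ (a, e) * \<sigma> y $$ (e, b))"
        using Ind_entry[OF j0(1) _ jb(2,3)] True unfolding y_def by simp
      also have "\<dots> = (\<sigma> x * \<sigma> y) $$ (a, b)" using sc[OF xH] sc[OF True] ia jb
        by (simp add: scalar_prod_def row_def col_def lessThan_atLeast0)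
      also have "\<dots> = \<sigma> z $$ (a, b)" using sm[OF xH True] xyz by simp
      also have "\<dots> = Ind d \<sigma> (g \<otimes> h) $$ (r, c)" unfolding ia(1) jb(1)
        using Ind_entry[OF ia(2,3) jb(2,3)] zH unfolding z_def by simp
      finally show ?thesis using prod by simp
    next
      case False
      have zH: "z \<notin> H"
      proof
        assume "z \<in> H" then have "inv x \<otimes> z \<in> H" using xH by simp
        with False yz show False by simp
      qed
      have "(\<Sum>e<d. \<sigma> x $$ (a, e) * Ind d \<sigma> h $$ (j0*d + e, j*d + b)) = 0"
        using Ind_entry[OF j0(1) _ jb(2,3)] False unfolding y_def by simp
      moreover have "Ind d \<sigma> (g \<otimes> h) $$ (r, c) = 0" unfolding ia(1) jb(1)
        using Ind_entry[OF ia(2,3) jb(2,3)] zH unfolding z_def by simp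
      ultimately show ?thesis using prod by simp
    qed
  qed simp_all
next
  fix g assume "g \<in> carrier G"
  show "Ind d \<sigma> g \<in> carrier_mat (k * d) (k * d)" by simp
next
  have s1: "\<sigma> \<one> = 1\<^sub>m d" using rep_one[OF s] by simp
  show "Ind d \<sigma> \<one> = 1\<^sub>m (k * d)"
  proof (rule eq_matI)
    fix r c assume r: "r < dim_row (1\<^sub>m (k * d) :: complex mat)" and c: "c < dim_col (1\<^sub>m (k * d) :: complex mat)"
    have rk: "r < k * d" using r by simp
    obtain i a where ia: "r = i*d + a" "i < k" "a < d" by (rule blk_obtain[OF rk])
    have ck: "c < k * d" using c by simp
    obtain j b where jb: "c = j*d + b" "j < k" "b < d" by (rule blk_obtain[OF ck])
    have ti: "t i \<in> carrier G" and tj: "t j \<in> carrier G" using t_car ia jb by auto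
    have ii: "i = idx (t i)" using idx_unique[OF ti ia(2)] ti by simp
    have iff: "t i \<otimes> \<one> \<otimes> inv (t j) \<in> H \<longleftrightarrow> i = j"
    proof
      assume "t i \<otimes> \<one> \<otimes> inv (t j) \<in> H"
      then have "j = idx (t i)" using idx_unique[OF ti jb(2)] ti by simp
      then show "i = j" using ii by simp
    qed (use ti in simp)
    have rc: "r = c \<longleftrightarrow> i = j \<and> a = b"
    proof
      assume "r = c"
      then have "r div d = c div d" "r mod d = c mod d" by simp_all
      then show "i = j \<and> a = b" using ia jb by simp
    qed (use ia jb in simp)
    show "Ind d \<sigma> \<one> $$ (r, c) = 1\<^sub>m (k * d) $$ (r, c)"
      unfolding ia(1) jb(1) using Ind_entry[OF ia(2,3) jb(2,3)] iff s1 ti r c ia jb rc by auto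
  qed simp_all
qed

lemma sum_one_row: assumes b: "b < d" shows "(\<Sum>e<d. (1\<^sub>m d :: complex mat) $$ (b, e) * f e) = f b"
proof -
  have "(\<Sum>e<d. (1\<^sub>m d :: complex mat) $$ (b, e) * f e) = (\<Sum>e<d. if b = e then f e else 0)"
    by (rule sum.cong) (use b in auto)
  also have "\<dots> = f b" using b by (simp add: sum.delta)
  finally show ?thesis .
qed

lemma frob1:
  assumes p: "is_rep G m \<pi>" and s: "is_rep (G\<lparr>carrier := H\<rparr>) d \<sigma>"
    and Q: "intw (G\<lparr>carrier := H\<rparr>) m \<pi> d \<sigma> Q" and nz: "Q \<noteq> 0\<^sub>m d m"
  shows "\<exists>\<Phi>. intw G m \<pi> (k*d) (Ind d \<sigma>) \<Phi> \<and> \<Phi> \<noteq> 0\<^sub>m (k*d) m"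
proof -
  have Qc: "Q \<in> carrier_mat d m" using intw_carrier[OF Q] .
  have Qe: "Q * \<pi> h = \<sigma> h * Q" if "h \<in> H" for h using intw_eq[OF Q] that by simp
  have sc: "\<sigma> x \<in> carrier_mat d d" if "x \<in> H" for x using rep_carrier[OF s] that by simp
  have pc: "\<pi> x \<in> carrier_mat m m" if "x \<in> carrier G" for x using rep_carrier[OF p] that by simp
  define \<Phi> where "\<Phi> = mat (k*d) m (\<lambda>(r,c). (Q * \<pi> (t (r div d))) $$ (r mod d, c))"
  have \<Phi>c: "\<Phi> \<in> carrier_mat (k*d) m" unfolding \<Phi>_def by simp
  have \<Phi>e: "\<Phi> $$ (i*d+a, c) = (Q * \<pi> (t i)) $$ (a, c)" if "i < k" "a < d" "c < m" for i a c
    unfolding \<Phi>_def using that blk_lt[of i k a d] by simp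
  have "intw G m \<pi> (k*d) (Ind d \<sigma>) \<Phi>" unfolding intw_def
  proof (intro conjI ballI \<Phi>c)
    fix g assume g: "g \<in> carrier G"
    show "\<Phi> * \<pi> g = Ind d \<sigma> g * \<Phi>"
    proof (rule eq_matI)
      fix r c assume r: "r < dim_row (Ind d \<sigma> g * \<Phi>)" and c: "c < dim_col (Ind d \<sigma> g * \<Phi>)"
      have rk: "r < k * d" using r by simp
      obtain i a where ia: "r = i*d + a" "i < k" "a < d" by (rule blk_obtain[OF rk])
      have cm: "c < m" using c \<Phi>c by simp
      have ti: "t i \<in> carrier G" using t_car ia by auto
      have tig: "t i \<otimes> g \<in> carrier G" using ti g by simp
      define j0 where "j0 = idx (t i \<otimes> g)"
      have j0: "j0 < k" "t i \<otimes> g \<otimes> inv (t j0) \<in> H" using idx[OF tig] unfolding j0_def by auto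
      have tj0: "t j0 \<in> carrier G" using t_car j0 by auto
      define x where "x = t i \<otimes> g \<otimes> inv (t j0)"
      have xH: "x \<in> H" using j0(2) unfolding x_def .
      have xc: "x \<in> carrier G" using xH by simp
      have xt: "x \<otimes> t j0 = t i \<otimes> g" unfolding x_def using ti g tj0 by (simp add: m_assoc)
      have "(\<Phi> * \<pi> g) $$ (r, c) = (\<Sum>s\<in>{0..<m}. \<Phi> $$ (i*d+a, s) * \<pi> g $$ (s, c))"
        using rk cm \<Phi>c pc[OF g] ia(1) by (simp add: scalar_prod_def row_def col_def)
      also have "\<dots> = (\<Sum>s\<in>{0..<m}. (Q * \<pi> (t i)) $$ (a, s) * \<pi> g $$ (s, c))"
        using \<Phi>e ia by simp
      also have "\<dots> = ((Q * \<pi> (t i)) * \<pi> g) $$ (a, c)"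
      proof -
        define R where "R = Q * \<pi> (t i)"
        have Rc: "R \<in> carrier_mat d m" unfolding R_def using Qc pc[OF ti] by simp
        show ?thesis unfolding R_def[symmetric] using Rc pc[OF g] ia cm by (simp add: scalar_prod_def row_def col_def)
      qed
      also have "\<dots> = (Q * \<pi> (t i \<otimes> g)) $$ (a, c)"
        using Qc pc[OF ti] pc[OF g] rep_mult[OF p ti g] by simp
      finally have L: "(\<Phi> * \<pi> g) $$ (r, c) = (Q * \<pi> (t i \<otimes> g)) $$ (a, c)" .
      have "(Ind d \<sigma> g * \<Phi>) $$ (r, c) = (\<Sum>e<d. \<sigma> x $$ (a, e) * \<Phi> $$ (j0 * d + e, c))"
        unfolding ia(1) x_def j0_def using Ind_mult_entry[OF g ia(2,3) \<Phi>c cm] .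
      also have "\<dots> = (\<Sum>e<d. \<sigma> x $$ (a, e) * (Q * \<pi> (t j0)) $$ (e, c))"
        using \<Phi>e j0(1) cm by simp
      also have "\<dots> = (\<sigma> x * (Q * \<pi> (t j0))) $$ (a, c)"
        using sc[OF xH] Qc pc[OF tj0] ia cm by (simp add: scalar_prod_def row_def col_def lessThan_atLeast0)
      also have "\<dots> = ((\<sigma> x * Q) * \<pi> (t j0)) $$ (a, c)"
        using sc[OF xH] Qc pc[OF tj0] by (simp add: assoc_mult_mat[of _ d d _ m _ m])
      also have "\<dots> = ((Q * \<pi> x) * \<pi> (t j0)) $$ (a, c)" using Qe[OF xH] by simp
      also have "\<dots> = (Q * (\<pi> x * \<pi> (t j0))) $$ (a, c)"
        using Qc pc[OF xc] pc[OF tj0] by (simp add: assoc_mult_mat[of _ d m _ m _ m])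
      also have "\<dots> = (Q * \<pi> (t i \<otimes> g)) $$ (a, c)" using rep_mult[OF p xc tj0] xt by simp
      finally show "(\<Phi> * \<pi> g) $$ (r, c) = (Ind d \<sigma> g * \<Phi>) $$ (r, c)" using L by simp
    qed (use \<Phi>c pc[OF g] in simp_all)
  qed
  moreover have "\<Phi> \<noteq> 0\<^sub>m (k*d) m"
  proof
    assume z: "\<Phi> = 0\<^sub>m (k*d) m"
    have "Q = 0\<^sub>m d m"
    proof (rule eq_matI)
      fix a c assume a: "a < dim_row (0\<^sub>m d m :: complex mat)" and c: "c < dim_col (0\<^sub>m d m :: complex mat)"
      have "\<Phi> $$ (i0*d+a, c) = (Q * \<pi> (t i0)) $$ (a, c)" using \<Phi>e i0 a c by simp
      also have "\<dots> = Q $$ (a, c)" using ti0 rep_one[OF p] Qc by simp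
      finally show "Q $$ (a, c) = 0\<^sub>m d m $$ (a, c)" using z a c blk_lt[of i0 k a d] i0 by simp
    qed (use Qc in simp_all)
    with nz show False by simp
  qed
  ultimately show ?thesis by blast
qed

lemma frob2:
  assumes p: "is_rep G m \<pi>" and s: "is_rep (G\<lparr>carrier := H\<rparr>) d \<sigma>"
    and P: "intw G m \<pi> (k*d) (Ind d \<sigma>) \<Phi>" and nz: "\<Phi> \<noteq> 0\<^sub>m (k*d) m"
  shows "\<exists>Q. intw (G\<lparr>carrier := H\<rparr>) m \<pi> d \<sigma> Q \<and> Q \<noteq> 0\<^sub>m d m"
proof -
  have \<Phi>c: "\<Phi> \<in> carrier_mat (k*d) m" using intw_carrier[OF P] .
  have sc: "\<sigma> x \<in> carrier_mat d d" if "x \<in> H" for x using rep_carrier[OF s] that by simp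
  have pc: "\<pi> x \<in> carrier_mat m m" if "x \<in> carrier G" for x using rep_carrier[OF p] that by simp
  have s1: "\<sigma> \<one> = 1\<^sub>m d" using rep_one[OF s] by simp
  define Q where "Q = mat d m (\<lambda>(a,c). \<Phi> $$ (i0*d + a, c))"
  have Qc: "Q \<in> carrier_mat d m" unfolding Q_def by simp
  have row0: "(\<Phi> * \<pi> g) $$ (i0*d+a, c) = (Q * \<pi> g) $$ (a, c)" if g: "g \<in> carrier G" and a: "a < d" and c: "c < m" for g a c
    using blk_lt[OF i0 a] \<Phi>c pc[OF g] a c unfolding Q_def by (simp add: scalar_prod_def row_def col_def)
  have "intw (G\<lparr>carrier := H\<rparr>) m \<pi> d \<sigma> Q" unfolding intw_def
  proof (intro conjI ballI Qc)
    fix h assume hH: "h \<in> carrier (G\<lparr>carrier := H\<rparr>)"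
    have hH': "h \<in> H" using hH by simp
    have h: "h \<in> carrier G" using hH' by simp
    show "Q * \<pi> h = \<sigma> h * Q"
    proof (rule eq_matI)
      fix a c assume a: "a < dim_row (\<sigma> h * Q)" and c: "c < dim_col (\<sigma> h * Q)"
      have a': "a < d" and c': "c < m" using a c sc[OF hH'] Qc by auto
      have id: "idx (t i0 \<otimes> h) = i0" using idx_unique[of "t i0 \<otimes> h" i0] ti0 h hH' i0 by simp
      have "(Q * \<pi> h) $$ (a, c) = (\<Phi> * \<pi> h) $$ (i0*d+a, c)" using row0[OF h a' c'] by simp
      also have "\<dots> = (Ind d \<sigma> h * \<Phi>) $$ (i0*d+a, c)" using intw_eq[OF P h] by simp
      also have "\<dots> = (\<Sum>e<d. \<sigma> h $$ (a, e) * \<Phi> $$ (i0 * d + e, c))"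
        using Ind_mult_entry[OF h i0 a' \<Phi>c c'] id ti0 h by simp
      also have "\<dots> = (\<sigma> h * Q) $$ (a, c)"
        using sc[OF hH'] Qc a' c' unfolding Q_def by (simp add: scalar_prod_def row_def col_def lessThan_atLeast0)
      finally show "(Q * \<pi> h) $$ (a, c) = (\<sigma> h * Q) $$ (a, c)" .
    qed (use Qc sc[OF hH'] pc[OF h] in simp_all)
  qed
  moreover have "Q \<noteq> 0\<^sub>m d m"
  proof
    assume z: "Q = 0\<^sub>m d m"
    have "\<Phi> = 0\<^sub>m (k*d) m"
    proof (rule eq_matI)
      fix r c assume r: "r < dim_row (0\<^sub>m (k*d) m :: complex mat)" and c: "c < dim_col (0\<^sub>m (k*d) m :: complex mat)"
      have rk: "r < k * d" using r by simp
      obtain j b where jb: "r = j*d + b" "j < k" "b < d" by (rule blk_obtain[OF rk])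
      have cm: "c < m" using c by simp
      have tj: "t j \<in> carrier G" using t_car jb by auto
      have id: "idx (t i0 \<otimes> t j) = j" using idx_unique[of "t i0 \<otimes> t j" j] ti0 tj jb by simp
      have "0 = (Q * \<pi> (t j)) $$ (b, c)" using z pc[OF tj] jb cm by simp
      also have "\<dots> = (\<Phi> * \<pi> (t j)) $$ (i0*d+b, c)" using row0[OF tj jb(3) cm] by simp
      also have "\<dots> = (Ind d \<sigma> (t j) * \<Phi>) $$ (i0*d+b, c)" using intw_eq[OF P tj] by simp
      also have "\<dots> = (\<Sum>e<d. (1\<^sub>m d :: complex mat) $$ (b, e) * \<Phi> $$ (j * d + e, c))"
        using Ind_mult_entry[OF tj i0 jb(3) \<Phi>c cm] id ti0 tj s1 by simp
      also have "\<dots> = \<Phi> $$ (j*d+b, c)" using sum_one_row[OF jb(3)] by simp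
      finally show "\<Phi> $$ (r, c) = 0\<^sub>m (k*d) m $$ (r, c)" using jb rk cm by simp
    qed (use \<Phi>c in simp_all)
    with nz show False by simp
  qed
  ultimately show ?thesis by blast
qed

end

lemma assoc_weak:
  assumes B: "(B::complex mat) \<in> carrier_mat n n" and C: "C \<in> carrier_mat n p"
  shows "(A * B) * C = A * (B * C)"
proof (rule eq_matI)
  fix i j assume i: "i < dim_row (A * (B * C))" and j: "j < dim_col (A * (B * C))"
  define a where "a = row A i"
  have "((A * B) * C) $$ (i, j) = (\<Sum>l\<in>{0..<n}. (\<Sum>m\<in>{0..<n}. a $ m * B $$ (m, l)) * C $$ (l, j))"
    using i j B C unfolding a_def by (simp add: scalar_prod_def)
  also have "\<dots> = (\<Sum>l\<in>{0..<n}. \<Sum>m\<in>{0..<n}. a $ m * B $$ (m, l) * C $$ (l, j))"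
    by (simp add: sum_distrib_right)
  also have "\<dots> = (\<Sum>m\<in>{0..<n}. \<Sum>l\<in>{0..<n}. a $ m * B $$ (m, l) * C $$ (l, j))"
    by (rule sum.swap)
  also have "\<dots> = (\<Sum>m\<in>{0..<n}. a $ m * (\<Sum>l\<in>{0..<n}. B $$ (m, l) * C $$ (l, j)))"
    by (simp add: sum_distrib_left mult.assoc)
  also have "\<dots> = (A * (B * C)) $$ (i, j)" using i j B C unfolding a_def by (simp add: scalar_prod_def)
  finally show "((A * B) * C) $$ (i, j) = (A * (B * C)) $$ (i, j)" .
qed (use B C in auto)

lemma one_invertible: "invertible_mat (1\<^sub>m n :: complex mat)"
  unfolding invertible_mat_def inverts_mat_def by (intro conjI exI[of _ "1\<^sub>m n"]) auto

lemma rep_iso_refl: "is_rep \<Gamma> n \<rho> \<Longrightarrow> (\<rho>, \<rho>) \<in> rep_iso \<Gamma> n"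
  unfolding rep_iso_def using one_invertible
  by (auto intro!: bexI[of _ "1\<^sub>m n"] dest: rep_carrier)

lemma rep_iso_trans_gen:
  assumes i1: "(\<rho>, \<sigma>) \<in> rep_iso \<Gamma> n" and i2: "(\<sigma>, \<tau>) \<in> rep_iso \<Gamma> n"
    and r: "is_rep \<Gamma> n \<rho>" and s: "is_rep \<Gamma> n \<sigma>"
  shows "(\<rho>, \<tau>) \<in> rep_iso \<Gamma> n"
proof -
  obtain P where P: "P \<in> carrier_mat n n" "invertible_mat P" "\<forall>g\<in>carrier \<Gamma>. P * \<rho> g = \<sigma> g * P"
    using i1 unfolding rep_iso_def by auto
  obtain Q where Q: "Q \<in> carrier_mat n n" "invertible_mat Q" "\<forall>g\<in>carrier \<Gamma>. Q * \<sigma> g = \<tau> g * Q"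
    using i2 unfolding rep_iso_def by auto
  have "Q * P * \<rho> g = \<tau> g * (Q * P)" if g: "g \<in> carrier \<Gamma>" for g
  proof -
    have c: "\<rho> g \<in> carrier_mat n n" "\<sigma> g \<in> carrier_mat n n" using rep_carrier[OF r g] rep_carrier[OF s g] by auto
    have "Q * P * \<rho> g = Q * (P * \<rho> g)" using c P(1) Q(1) by simp
    also have "\<dots> = Q * (\<sigma> g * P)" using P(3) g by simp
    also have "\<dots> = (Q * \<sigma> g) * P" using c P(1) Q(1) by simp
    also have "\<dots> = (\<tau> g * Q) * P" using Q(3) g by simp
    also have "\<dots> = \<tau> g * (Q * P)" using assoc_weak[OF Q(1) P(1)] by simp
    finally show ?thesis .
  qed
  moreover have "invertible_mat (Q * P)"
    using inj_sq_invertible[of "Q * P" n] inj_mult[OF Q(1) P(1) invertible_inj[OF Q(1,2)] invertible_inj[OF P(1,2)]] P(1) Q(1)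
    by simp
  ultimately show ?thesis unfolding rep_iso_def using P(1) Q(1) by auto
qed

definition Cls :: "('g,'b) monoid_scheme \<Rightarrow> nat \<Rightarrow> ('g \<Rightarrow> complex mat) set set" where
  "Cls \<Gamma> n = {\<rho>. is_irrep \<Gamma> n \<rho>} // rep_iso \<Gamma> n"

definition crep :: "('g,'b) monoid_scheme \<Rightarrow> nat \<Rightarrow> ('g \<Rightarrow> complex mat) set \<Rightarrow> ('g \<Rightarrow> complex mat)" where
  "crep \<Gamma> n c = (SOME \<rho>. \<rho> \<in> c \<and> is_irrep \<Gamma> n \<rho>)"

lemma crep: assumes "c \<in> Cls \<Gamma> n" shows "crep \<Gamma> n c \<in> c \<and> is_irrep \<Gamma> n (crep \<Gamma> n c)"
proof -
  obtain \<rho> where "c = rep_iso \<Gamma> n `` {\<rho>}" "is_irrep \<Gamma> n \<rho>" using assms unfolding Cls_def by (auto elim: quotientE)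
  then have "\<rho> \<in> c \<and> is_irrep \<Gamma> n \<rho>" using rep_iso_refl[OF irrep_rep] by auto
  then show ?thesis unfolding crep_def by (rule someI[of "\<lambda>\<rho>. \<rho> \<in> c \<and> is_irrep \<Gamma> n \<rho>"])
qed

lemma cls_of: "is_irrep \<Gamma> n \<rho> \<Longrightarrow> rep_iso \<Gamma> n `` {\<rho>} \<in> Cls \<Gamma> n"
  unfolding Cls_def by (rule quotientI) simp

lemma cls_mem: "is_irrep \<Gamma> n \<rho> \<Longrightarrow> \<rho> \<in> rep_iso \<Gamma> n `` {\<rho>}"
  using rep_iso_refl[OF irrep_rep] by auto

lemma same_cls_iso:
  assumes c: "c \<in> Cls \<Gamma> n" and r: "\<rho> \<in> c" "is_irrep \<Gamma> n \<rho>" and s: "\<sigma> \<in> c" "is_irrep \<Gamma> n \<sigma>"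
  shows "(\<rho>, \<sigma>) \<in> rep_iso \<Gamma> n"
proof -
  obtain \<rho>0 where 0: "c = rep_iso \<Gamma> n `` {\<rho>0}" "is_irrep \<Gamma> n \<rho>0" using c unfolding Cls_def by (auto elim: quotientE)
  have "(\<rho>0, \<rho>) \<in> rep_iso \<Gamma> n" "(\<rho>0, \<sigma>) \<in> rep_iso \<Gamma> n" using 0 r s by auto
  moreover have rr: "is_rep \<Gamma> n \<rho>0" "is_rep \<Gamma> n \<rho>" "is_rep \<Gamma> n \<sigma>" using irrep_rep 0(2) r(2) s(2) by auto
  ultimately have "(\<rho>, \<rho>0) \<in> rep_iso \<Gamma> n" "(\<rho>0, \<sigma>) \<in> rep_iso \<Gamma> n" using rep_iso_sym by auto
  then show ?thesis using rep_iso_trans rr by blast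
qed

lemma iso_same_cls:
  assumes c: "c \<in> Cls \<Gamma> n" and c': "c' \<in> Cls \<Gamma> n" and r: "\<rho> \<in> c" "is_irrep \<Gamma> n \<rho>"
    and s: "\<sigma> \<in> c'" "is_irrep \<Gamma> n \<sigma>" and iso: "(\<rho>, \<sigma>) \<in> rep_iso \<Gamma> n"
  shows "c = c'"
proof -
  obtain \<rho>0 where 0: "c = rep_iso \<Gamma> n `` {\<rho>0}" "is_irrep \<Gamma> n \<rho>0" using c unfolding Cls_def by (auto elim: quotientE)
  obtain \<sigma>0 where 1: "c' = rep_iso \<Gamma> n `` {\<sigma>0}" "is_irrep \<Gamma> n \<sigma>0" using c' unfolding Cls_def by (auto elim: quotientE)
  have a: "(\<rho>0, \<rho>) \<in> rep_iso \<Gamma> n" "(\<sigma>0, \<sigma>) \<in> rep_iso \<Gamma> n" using 0 1 r s by auto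
  have rr: "is_rep \<Gamma> n \<rho>0" "is_rep \<Gamma> n \<sigma>0" "is_rep \<Gamma> n \<rho>" "is_rep \<Gamma> n \<sigma>"
    using irrep_rep 0(2) 1(2) r(2) s(2) by auto
  have b: "(\<rho>0, \<sigma>0) \<in> rep_iso \<Gamma> n"
    using rep_iso_trans[OF rep_iso_trans[OF a(1) iso] rep_iso_sym[OF a(2)]] rr by auto
  have b': "(\<sigma>0, \<rho>0) \<in> rep_iso \<Gamma> n" using rep_iso_sym[OF b] rr by auto
  show ?thesis unfolding 0(1) 1(1)
    using rep_iso_trans_gen[OF b _ rr(1,2)] rep_iso_trans_gen[OF b' _ rr(2,1)] by auto
qed

lemma nonzero_intw_same_cls:
  assumes c: "c \<in> Cls \<Gamma> n" and c': "c' \<in> Cls \<Gamma> n'" and r: "\<rho> \<in> c" "is_irrep \<Gamma> n \<rho>"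
    and s: "\<sigma> \<in> c'" "is_irrep \<Gamma> n' \<sigma>" and A: "intw \<Gamma> n \<rho> n' \<sigma> A" and nz: "A \<noteq> 0\<^sub>m n' n"
  shows "n = n' \<and> c = c'"
proof -
  have "n = n' \<and> (\<rho>, \<sigma>) \<in> rep_iso \<Gamma> n" using schur[OF r(2) s(2) A nz] by auto
  then show ?thesis using iso_same_cls[OF c _ r] c' s by auto
qed

definition Tot :: "('g,'b) monoid_scheme \<Rightarrow> nat \<Rightarrow> (nat \<times> ('g \<Rightarrow> complex mat) set) set" where
  "Tot \<Gamma> N = Sigma {1..N} (Cls \<Gamma>)"

definition ecard :: "'a set \<Rightarrow> enat" where
  "ecard A = (if finite A then enat (card A) else \<infinity>)"


lemma r_irr_ecard: "r_irr \<Gamma> n = ecard (Cls \<Gamma> n)"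
  unfolding r_irr_def Cls_def ecard_def Let_def by simp

lemma ecard_image: "inj_on f A \<Longrightarrow> ecard (f ` A) = ecard A"
  unfolding ecard_def by (simp add: finite_image_iff card_image)

lemma ecard_Un: "A \<inter> B = {} \<Longrightarrow> ecard (A \<union> B) = ecard A + ecard B"
  unfolding ecard_def by (auto simp: card_Un_disjoint)

lemma ecard_Sigma: "finite I \<Longrightarrow> ecard (Sigma I A) = (\<Sum>i\<in>I. ecard (A i))"
proof (induction I rule: finite_induct)
  case empty then show ?case by (simp add: ecard_def zero_enat_def)
next
  case (insert x I)
  have "Sigma (insert x I) A = (Pair x ` A x) \<union> Sigma I A" by auto
  moreover have "(Pair x ` A x) \<inter> Sigma I A = {}" using insert.hyps by auto
  ultimately have "ecard (Sigma (insert x I) A) = ecard (Pair x ` A x) + ecard (Sigma I A)"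
    using ecard_Un by metis
  also have "ecard (Pair x ` A x) = ecard (A x)" by (rule ecard_image) (auto simp: inj_on_def)
  finally show ?case using insert by simp
qed

lemma R_irr_ecard: "R_irr \<Gamma> N = ecard (Tot \<Gamma> N)"
  unfolding R_irr_def Tot_def r_irr_ecard by (simp add: ecard_Sigma)

lemma ecard_fiber_le:
  assumes fXY: "\<And>x. x \<in> X \<Longrightarrow> f x \<in> Y"
    and fib: "\<And>y. y \<in> Y \<Longrightarrow> finite {x\<in>X. f x = y} \<and> card {x\<in>X. f x = y} \<le> K"
  shows "ecard X \<le> enat K * ecard Y"
proof (cases "finite Y")
  case True
  have XU: "X = (\<Union>y\<in>Y. {x\<in>X. f x = y})" using fXY by auto
  have fX: "finite X" using True fib by (subst XU) auto
  have "card X \<le> (\<Sum>y\<in>Y. card {x\<in>X. f x = y})" by (subst XU) (rule card_UN_le[OF True])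
  also have "\<dots> \<le> (\<Sum>y\<in>Y. K)" using fib by (intro sum_mono) auto
  also have "\<dots> = K * card Y" by simp
  finally show ?thesis using True fX unfolding ecard_def by simp
next
  case False
  show ?thesis
  proof (cases "K = 0")
    case True
    have "X = {}"
    proof (rule ccontr)
      assume "X \<noteq> {}" then obtain x where x: "x \<in> X" by auto
      have "finite {x'\<in>X. f x' = f x}" "card {x'\<in>X. f x' = f x} \<le> 0" using fib[OF fXY[OF x]] True by auto
      then have "{x'\<in>X. f x' = f x} = {}" by simp
      with x show False by auto
    qed
    then show ?thesis unfolding ecard_def by (simp add: zero_enat_def)
  next
    case False
    then show ?thesis using \<open>infinite Y\<close> unfolding ecard_def by (simp add: enat_0_iff)
  qed
qed

lemma rep_restrict: "is_rep G m \<pi> \<Longrightarrow> H \<subseteq> carrier G \<Longrightarrow> is_rep (G\<lparr>carrier := H\<rparr>) m \<pi>"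
  unfolding is_rep_def by auto

lemma card_bound_from_finite:
  assumes "\<And>F. F \<subseteq> A \<Longrightarrow> finite F \<Longrightarrow> card F \<le> K"
  shows "finite A \<and> card A \<le> K"
proof -
  have "finite A"
  proof (rule ccontr)
    assume "infinite A"
    then obtain F where "finite F" "card F = Suc K" "F \<subseteq> A" using infinite_arbitrarily_large by blast
    then have "card F \<le> K" using assms by blast
    with \<open>card F = Suc K\<close> show False by simp
  qed
  then show ?thesis using assms by blast
qed

lemma mult_invertible_nonzero:
  assumes Q: "(Q::complex mat) \<in> carrier_mat a n" and P: "P \<in> carrier_mat n n" and i: "invertible_mat P"
    and nz: "Q \<noteq> 0\<^sub>m a n"
  shows "Q * P \<noteq> 0\<^sub>m a n"
proof
  assume z: "Q * P = 0\<^sub>m a n"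
  obtain B where B: "inverts_mat P B" "inverts_mat B P" using i unfolding invertible_mat_def by auto
  have PB: "P * B = 1\<^sub>m n" using B(1) P unfolding inverts_mat_def by simp
  have dc: "dim_col B = n" using arg_cong[OF PB, of dim_col] by simp
  have BP: "B * P = 1\<^sub>m (dim_row B)" using B(2) unfolding inverts_mat_def by simp
  have dr: "dim_row B = n" using arg_cong[OF BP, of dim_col] P by simp
  have Bc: "B \<in> carrier_mat n n" using dc dr by (intro carrier_matI) auto
  have "Q = Q * 1\<^sub>m n" using Q by simp
  also have "\<dots> = Q * (P * B)" using PB by simp
  also have "\<dots> = (Q * P) * B" using assoc_mult_mat[OF Q P Bc] by simp
  also have "\<dots> = 0\<^sub>m a n * B" using z by simp
  also have "\<dots> = 0\<^sub>m a n" using left_mult_zero_mat[OF Bc] .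
  finally show False using nz by simp
qed

lemma full_invar:
  assumes r: "is_rep \<Gamma> m \<rho>"
  shows "invar \<Gamma> m \<rho> (carrier_vec m)"
  unfolding invar_def is_subspace_def
proof (intro conjI ballI allI subset_refl)
  show "0\<^sub>v m \<in> carrier_vec m" by simp
  fix v w :: "complex vec" assume "v \<in> carrier_vec m" "w \<in> carrier_vec m"
  then show "v + w \<in> carrier_vec m" by simp
next
  fix c :: complex and v :: "complex vec" assume "v \<in> carrier_vec m"
  then show "c \<cdot>\<^sub>v v \<in> carrier_vec m" by simp
next
  fix g and w :: "complex vec" assume g: "g \<in> carrier \<Gamma>" and w: "w \<in> carrier_vec m"
  show "\<rho> g *\<^sub>v w \<in> carrier_vec m" using rep_carrier[OF r g] w by simp
qed

lemma full_nonzero: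
  assumes m: "m > 0" shows "carrier_vec m \<noteq> {0\<^sub>v m :: complex vec}"
proof
  assume e: "carrier_vec m = {0\<^sub>v m :: complex vec}"
  have "unit_vec m 0 \<in> carrier_vec m" by simp
  then have eq: "unit_vec m 0 = (0\<^sub>v m :: complex vec)" using e by blast
  have a: "(unit_vec m 0 :: complex vec) $ 0 = 1" using m by simp
  have b: "(0\<^sub>v m :: complex vec) $ 0 = 0" using m by simp
  from arg_cong[OF eq, of "\<lambda>v. v $ 0"] a b show False by simp
qed

context fi
begin

lemma HG_group: "group (G\<lparr>carrier := H\<rparr>)" using subgroup_is_group[OF is_group] .

lemma k_pos: "k > 0" using i0 by simp

lemma dir1_exists:
  assumes p: "is_irrep G m \<pi>"
  shows "\<exists>d \<sigma> Q. is_irrep (G\<lparr>carrier := H\<rparr>) d \<sigma> \<and> d \<le> m \<and> m \<le> k * d \<and>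
     intw (G\<lparr>carrier := H\<rparr>) m \<pi> d \<sigma> Q \<and> Q \<noteq> 0\<^sub>m d m"
proof -
  let ?HG = "G\<lparr>carrier := H\<rparr>"
  have HG: "group ?HG" by (rule HG_group)
  have rH: "is_rep ?HG m \<pi>" using rep_restrict[OF irrep_rep[OF p] subset] .
  have dr: "is_rep ?HG m (dual ?HG \<pi>)" using dual_rep[OF HG rH] .
  obtain d \<tau> B where B: "is_irrep ?HG d \<tau>" "B \<in> carrier_mat m d" "inj_mat B" "intw ?HG d \<tau> m (dual ?HG \<pi>) B"
    using extract_irrep[OF dr full_invar[OF dr] full_nonzero[OF irrep_pos[OF p]]] by blast
  have d0: "d > 0" using irrep_pos[OF B(1)] .
  have "intw ?HG m (dual ?HG (dual ?HG \<pi>)) d (dual ?HG \<tau>) (transpose_mat B)"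
    using intw_dual[OF HG irrep_rep[OF B(1)] dr B(4)] .
  hence BT: "intw ?HG m \<pi> d (dual ?HG \<tau>) (transpose_mat B)"
    using intw_cong[of ?HG "dual ?HG (dual ?HG \<pi>)" \<pi> "dual ?HG \<tau>" "dual ?HG \<tau>"] dual_dual[OF HG] by blast
  have si: "is_irrep ?HG d (dual ?HG \<tau>)" using dual_irrep[OF HG B(1)] .
  have "B \<noteq> 0\<^sub>m m d" using inj_nonzero[OF B(2,3) d0] .
  hence nz: "transpose_mat B \<noteq> 0\<^sub>m d m" using transpose_zero_iff[OF B(2)] by simp
  have dm: "d \<le> m" using inj_dim[OF B(2,3)] .
  obtain \<Phi> where \<Phi>: "intw G m \<pi> (k*d) (Ind d (dual ?HG \<tau>)) \<Phi>" "\<Phi> \<noteq> 0\<^sub>m (k*d) m"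
    using frob1[OF irrep_rep[OF p] irrep_rep[OF si] BT nz] by blast
  have "inj_mat \<Phi>" using irr_inj[OF p Ind_rep[OF irrep_rep[OF si]] \<Phi>] .
  hence mk: "m \<le> k * d" using inj_dim[OF intw_carrier[OF \<Phi>(1)]] by simp
  show ?thesis
    by (rule exI[of _ d], rule exI[of _ "dual ?HG \<tau>"], rule exI[of _ "transpose_mat B"])
      (use si dm BT nz mk in simp)
qed

lemma dir2_exists:
  assumes r: "is_irrep (G\<lparr>carrier := H\<rparr>) n \<rho>"
  shows "\<exists>m \<pi> Q. is_irrep G m \<pi> \<and> m \<le> k * n \<and> intw (G\<lparr>carrier := H\<rparr>) m \<pi> n \<rho> Q \<and> Q \<noteq> 0\<^sub>m n m"
proof -
  let ?HG = "G\<lparr>carrier := H\<rparr>"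
  have ir: "is_rep G (k*n) (Ind n \<rho>)" using Ind_rep[OF irrep_rep[OF r]] .
  have kn: "k * n > 0" using k_pos irrep_pos[OF r] by simp
  have ex: "\<exists>d \<sigma> B. is_irrep G d \<sigma> \<and> B \<in> carrier_mat (k*n) d \<and> inj_mat B \<and> img B \<subseteq> carrier_vec (k*n)
      \<and> intw G d \<sigma> (k*n) (Ind n \<rho>) B"
    by (rule extract_irrep[OF ir full_invar[OF ir] full_nonzero[OF kn]])
  then obtain m \<pi> B where B: "is_irrep G m \<pi>" "B \<in> carrier_mat (k*n) m" "inj_mat B" "intw G m \<pi> (k*n) (Ind n \<rho>) B"
    by blast
  have "m \<le> k * n" using inj_dim[OF B(2,3)] .
  moreover have "B \<noteq> 0\<^sub>m (k*n) m" using inj_nonzero[OF B(2,3) irrep_pos[OF B(1)]] .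
  then obtain Q where QQ: "intw ?HG m \<pi> n \<rho> Q" "Q \<noteq> 0\<^sub>m n m"
    using frob2[OF irrep_rep[OF B(1)] irrep_rep[OF r] B(4)] by blast
  ultimately show ?thesis
    by (intro exI[of _ m] exI[of _ \<pi>] exI[of _ Q]) (use B(1) QQ in simp)
qed


lemma dir1: "R_irr G N \<le> enat k * R_irr (G\<lparr>carrier := H\<rparr>) N"
proof -
  let ?HG = "G\<lparr>carrier := H\<rparr>"
  have HG: "group ?HG" by (rule HG_group)
  define P1 where "P1 = (\<lambda>m \<pi> (p :: nat \<times> ('g \<Rightarrow> complex mat)). is_irrep ?HG (fst p) (snd p) \<and> fst p \<le> m \<and>
     (\<exists>Q. intw ?HG m \<pi> (fst p) (snd p) Q \<and> Q \<noteq> 0\<^sub>m (fst p) m))"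
  define ch where "ch = (\<lambda>m \<pi>. SOME p. P1 m \<pi> p)"
  have chP: "P1 m \<pi> (ch m \<pi>)" if irr: "is_irrep G m \<pi>" for m \<pi>
  proof -
    obtain d \<sigma> Q where "is_irrep ?HG d \<sigma>" "d \<le> m" "intw ?HG m \<pi> d \<sigma> Q" "Q \<noteq> 0\<^sub>m d m"
      using dir1_exists[OF irr] by blast
    then have "P1 m \<pi> (d, \<sigma>)" unfolding P1_def by auto
    then show ?thesis unfolding ch_def by (rule someI)
  qed
  define pr where "pr = (\<lambda>x :: nat \<times> ('g \<Rightarrow> complex mat) set. crep G (fst x) (snd x))"
  define f where "f = (\<lambda>x. (fst (ch (fst x) (pr x)), rep_iso ?HG (fst (ch (fst x) (pr x))) `` {snd (ch (fst x) (pr x))}))"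
  have prI: "is_irrep G (fst x) (pr x) \<and> pr x \<in> snd x" if "x \<in> Tot G N" for x
    using crep[of "snd x" G "fst x"] that unfolding pr_def Tot_def by auto
  have fx: "P1 (fst x) (pr x) (ch (fst x) (pr x))" if "x \<in> Tot G N" for x using chP prI[OF that] by blast
  have "ecard (Tot G N) \<le> enat k * ecard (Tot ?HG N)"
  proof (rule ecard_fiber_le[where f=f])
    fix x assume x: "x \<in> Tot G N"
    have P: "P1 (fst x) (pr x) (ch (fst x) (pr x))" using fx[OF x] .
    have "fst x \<le> N" using x unfolding Tot_def by auto
    moreover have "fst (ch (fst x) (pr x)) > 0" using P irrep_pos unfolding P1_def by auto
    moreover have "rep_iso ?HG (fst (ch (fst x) (pr x))) `` {snd (ch (fst x) (pr x))} \<in> Cls ?HG (fst (ch (fst x) (pr x)))"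
      using P cls_of unfolding P1_def by blast
    ultimately show "f x \<in> Tot ?HG N" unfolding f_def Tot_def using P unfolding P1_def by auto
  next
    fix y assume y: "y \<in> Tot ?HG N"
    obtain d c' where yd: "y = (d, c')" by (cases y)
    have c': "c' \<in> Cls ?HG d" and d0: "d > 0" using y yd unfolding Tot_def by auto
    define \<sigma>0 where "\<sigma>0 = crep ?HG d c'"
    have s0: "\<sigma>0 \<in> c'" "is_irrep ?HG d \<sigma>0" using crep[OF c'] unfolding \<sigma>0_def by auto
    have Ir: "is_rep G (k*d) (Ind d \<sigma>0)" using Ind_rep[OF irrep_rep[OF s0(2)]] .
    show "finite {x \<in> Tot G N. f x = y} \<and> card {x \<in> Tot G N. f x = y} \<le> k"
    proof (rule card_bound_from_finite)
      fix F assume FS: "F \<subseteq> {x \<in> Tot G N. f x = y}" and fF: "finite F"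
      have key: "d \<le> fst x \<and> (\<exists>\<Phi>. intw G (fst x) (pr x) (k*d) (Ind d \<sigma>0) \<Phi> \<and> inj_mat \<Phi>)" if xF: "x \<in> F" for x
      proof -
        have x: "x \<in> Tot G N" and fxy: "f x = y" using xF FS by auto
        obtain d' \<sigma> where ch: "ch (fst x) (pr x) = (d', \<sigma>)" by (cases "ch (fst x) (pr x)")
        have P: "is_irrep ?HG d' \<sigma>" "d' \<le> fst x" "\<exists>Q. intw ?HG (fst x) (pr x) d' \<sigma> Q \<and> Q \<noteq> 0\<^sub>m d' (fst x)"
          using fx[OF x] ch unfolding P1_def by auto
        have dd: "d' = d" and cc: "rep_iso ?HG d `` {\<sigma>} = c'" using fxy ch yd unfolding f_def by auto
        have "\<sigma> \<in> c'" using cc cls_mem P(1) dd by blast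
        then have iso: "(\<sigma>, \<sigma>0) \<in> rep_iso ?HG d" using same_cls_iso[OF c' _ _ s0] P(1) dd by simp
        then obtain Pm where Pm: "Pm \<in> carrier_mat d d" "invertible_mat Pm" "\<forall>g\<in>H. Pm * \<sigma> g = \<sigma>0 g * Pm"
          unfolding rep_iso_def by auto
        obtain Q where Q: "intw ?HG (fst x) (pr x) d \<sigma> Q" "Q \<noteq> 0\<^sub>m d (fst x)" using P(3) dd by auto
        have Qc: "Q \<in> carrier_mat d (fst x)" using intw_carrier[OF Q(1)] .
        have "intw ?HG (fst x) (pr x) d \<sigma>0 (Pm * Q)" unfolding intw_def
        proof (intro conjI ballI)
          show "Pm * Q \<in> carrier_mat d (fst x)" using Pm(1) Qc by simp
          fix h assume "h \<in> carrier ?HG"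
          then have h: "h \<in> H" by simp
          have pc: "pr x h \<in> carrier_mat (fst x) (fst x)" using rep_carrier[OF irrep_rep[OF conjunct1[OF prI[OF x]]]] h by simp
          have sc: "\<sigma> h \<in> carrier_mat d d" using rep_carrier[OF irrep_rep[OF P(1)]] h dd by simp
          have "Pm * Q * pr x h = Pm * (Q * pr x h)" using Pm(1) Qc pc by simp
          also have "\<dots> = Pm * (\<sigma> h * Q)" using intw_eq[OF Q(1)] h by simp
          also have "\<dots> = (Pm * \<sigma> h) * Q" using Pm(1) Qc sc by simp
          also have "\<dots> = (\<sigma>0 h * Pm) * Q" using Pm(3) h by simp
          also have "\<dots> = \<sigma>0 h * (Pm * Q)" using assoc_weak[OF Pm(1) Qc] by simp
          finally show "Pm * Q * pr x h = \<sigma>0 h * (Pm * Q)" .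
        qed
        moreover have "Pm * Q \<noteq> 0\<^sub>m d (fst x)"
          using inj_mult_nonzero[OF Pm(1) Qc invertible_inj[OF Pm(1,2)] Q(2)] .
        ultimately obtain \<Phi> where \<Phi>: "intw G (fst x) (pr x) (k*d) (Ind d \<sigma>0) \<Phi>" "\<Phi> \<noteq> 0\<^sub>m (k*d) (fst x)"
          using frob1[OF irrep_rep[OF conjunct1[OF prI[OF x]]] irrep_rep[OF s0(2)]] by blast
        have "inj_mat \<Phi>" using irr_inj[OF conjunct1[OF prI[OF x]] Ir \<Phi>] .
        then show ?thesis using \<Phi>(1) P(2) dd by blast
      qed
      define Af where "Af = (\<lambda>x. SOME \<Phi>. intw G (fst x) (pr x) (k*d) (Ind d \<sigma>0) \<Phi> \<and> inj_mat \<Phi>)"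
      have Af: "intw G (fst x) (pr x) (k*d) (Ind d \<sigma>0) (Af x) \<and> inj_mat (Af x)" if "x \<in> F" for x
        unfolding Af_def using someI_ex[OF conjunct2[OF key[OF that]]] .
      have sumle: "sum fst F \<le> k * d"
      proof (rule DS[where \<Gamma>=G and M="k*d" and \<psi>="Ind d \<sigma>0" and I=F and d=fst and \<pi>=pr and A=Af])
        show "group G" by (rule is_group)
        show "is_rep G (k * d) (Ind d \<sigma>0)" using Ir .
        show "finite F" using fF .
        fix i assume i: "i \<in> F"
        have iT: "i \<in> Tot G N" using i FS by auto
        show "is_irrep G (fst i) (pr i)" using prI[OF iT] by simp
        show "intw G (fst i) (pr i) (k * d) (Ind d \<sigma>0) (Af i)" using Af[OF i] by simp
        show "inj_mat (Af i)" using Af[OF i] by simp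
      next
        fix i j X assume i: "i \<in> F" and j: "j \<in> F" and ij: "i \<noteq> j" and X: "intw G (fst i) (pr i) (fst j) (pr j) X"
        have iT: "i \<in> Tot G N" and jT: "j \<in> Tot G N" using i j FS by auto
        show "X = 0\<^sub>m (fst j) (fst i)"
        proof (rule ccontr)
          assume nz: "X \<noteq> 0\<^sub>m (fst j) (fst i)"
          have ci: "snd i \<in> Cls G (fst i)" and cj: "snd j \<in> Cls G (fst j)" using iT jT unfolding Tot_def by auto
          have "fst i = fst j \<and> snd i = snd j"
            using nonzero_intw_same_cls[OF ci cj conjunct2[OF prI[OF iT]] conjunct1[OF prI[OF iT]]
              conjunct2[OF prI[OF jT]] conjunct1[OF prI[OF jT]] X nz] .
          with ij show False by (simp add: prod_eq_iff)
        qed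
      qed
      have "card F * d = (\<Sum>x\<in>F. d)" by simp
      also have "\<dots> \<le> sum fst F" using key by (intro sum_mono) auto
      also have "\<dots> \<le> k * d" using sumle .
      finally show "card F \<le> k" using d0 by simp
    qed
  qed
  then show ?thesis unfolding R_irr_ecard .
qed


lemma dir2: "R_irr (G\<lparr>carrier := H\<rparr>) N \<le> enat k * R_irr G (k * N)"
proof -
  let ?HG = "G\<lparr>carrier := H\<rparr>"
  have HG: "group ?HG" by (rule HG_group)
  define P2 where "P2 = (\<lambda>n \<rho> (p :: nat \<times> ('g \<Rightarrow> complex mat)). is_irrep G (fst p) (snd p) \<and> fst p \<le> k * n \<and>
     (\<exists>Q. intw ?HG (fst p) (snd p) n \<rho> Q \<and> Q \<noteq> 0\<^sub>m n (fst p)))"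
  define ch where "ch = (\<lambda>n \<rho>. SOME p. P2 n \<rho> p)"
  have chP: "P2 n \<rho> (ch n \<rho>)" if irr: "is_irrep ?HG n \<rho>" for n \<rho>
  proof -
    obtain m \<pi> Q where "is_irrep G m \<pi>" "m \<le> k * n" "intw ?HG m \<pi> n \<rho> Q" "Q \<noteq> 0\<^sub>m n m"
      using dir2_exists[OF irr] by blast
    then have "P2 n \<rho> (m, \<pi>)" unfolding P2_def by auto
    then show ?thesis unfolding ch_def by (rule someI)
  qed
  define pr where "pr = (\<lambda>x :: nat \<times> ('g \<Rightarrow> complex mat) set. crep ?HG (fst x) (snd x))"
  define f where "f = (\<lambda>x. (fst (ch (fst x) (pr x)), rep_iso G (fst (ch (fst x) (pr x))) `` {snd (ch (fst x) (pr x))}))"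
  have prI: "is_irrep ?HG (fst x) (pr x) \<and> pr x \<in> snd x" if "x \<in> Tot ?HG N" for x
    using crep[of "snd x" ?HG "fst x"] that unfolding pr_def Tot_def by auto
  have fx: "P2 (fst x) (pr x) (ch (fst x) (pr x))" if "x \<in> Tot ?HG N" for x using chP prI[OF that] by blast
  have "ecard (Tot ?HG N) \<le> enat k * ecard (Tot G (k * N))"
  proof (rule ecard_fiber_le[where f=f])
    fix x assume x: "x \<in> Tot ?HG N"
    have P: "P2 (fst x) (pr x) (ch (fst x) (pr x))" using fx[OF x] .
    have "fst x \<le> N" using x unfolding Tot_def by auto
    then have b: "k * fst x \<le> k * N" by (rule mult_le_mono2)
    have a: "fst (ch (fst x) (pr x)) \<le> k * fst x" using P unfolding P2_def by auto
    from a b have "fst (ch (fst x) (pr x)) \<le> k * N" by (rule order_trans)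
    moreover have "fst (ch (fst x) (pr x)) > 0" using P irrep_pos unfolding P2_def by auto
    moreover have "rep_iso G (fst (ch (fst x) (pr x))) `` {snd (ch (fst x) (pr x))} \<in> Cls G (fst (ch (fst x) (pr x)))"
      using P cls_of unfolding P2_def by blast
    ultimately show "f x \<in> Tot G (k * N)" unfolding f_def Tot_def by auto
  next
    fix y assume y: "y \<in> Tot G (k * N)"
    obtain m c' where ym: "y = (m, c')" by (cases y)
    have c': "c' \<in> Cls G m" and m0: "m > 0" using y ym unfolding Tot_def by auto
    define \<pi>0 where "\<pi>0 = crep G m c'"
    have p0: "\<pi>0 \<in> c'" "is_irrep G m \<pi>0" using crep[OF c'] unfolding \<pi>0_def by auto
    have p0H: "is_rep ?HG m \<pi>0" using rep_restrict[OF irrep_rep[OF p0(2)] subset] .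
    have dp0: "is_rep ?HG m (dual ?HG \<pi>0)" using dual_rep[OF HG p0H] .
    show "finite {x \<in> Tot ?HG N. f x = y} \<and> card {x \<in> Tot ?HG N. f x = y} \<le> k"
    proof (rule card_bound_from_finite)
      fix F assume FS: "F \<subseteq> {x \<in> Tot ?HG N. f x = y}" and fF: "finite F"
      have key: "m \<le> k * fst x \<and> (\<exists>A. intw ?HG (fst x) (dual ?HG (pr x)) m (dual ?HG \<pi>0) A \<and> inj_mat A)"
        if xF: "x \<in> F" for x
      proof -
        have x: "x \<in> Tot ?HG N" and fxy: "f x = y" using xF FS by auto
        have rx: "is_irrep ?HG (fst x) (pr x)" using prI[OF x] by simp
        obtain m' \<pi> where ch: "ch (fst x) (pr x) = (m', \<pi>)" by (cases "ch (fst x) (pr x)")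
        have P: "is_irrep G m' \<pi>" "m' \<le> k * fst x" "\<exists>Q. intw ?HG m' \<pi> (fst x) (pr x) Q \<and> Q \<noteq> 0\<^sub>m (fst x) m'"
          using fx[OF x] ch unfolding P2_def by auto
        have mm: "m' = m" and cc: "rep_iso G m `` {\<pi>} = c'" using fxy ch ym unfolding f_def by auto
        have "\<pi> \<in> c'" using cc cls_mem P(1) mm by blast
        then have iso: "(\<pi>0, \<pi>) \<in> rep_iso G m" using same_cls_iso[OF c' p0] P(1) mm by simp
        then obtain Pm where Pm: "Pm \<in> carrier_mat m m" "invertible_mat Pm" "\<forall>g\<in>carrier G. Pm * \<pi>0 g = \<pi> g * Pm"
          unfolding rep_iso_def by auto
        obtain Q where Q: "intw ?HG m \<pi> (fst x) (pr x) Q" "Q \<noteq> 0\<^sub>m (fst x) m" using P(3) mm by auto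
        have Qc: "Q \<in> carrier_mat (fst x) m" using intw_carrier[OF Q(1)] .
        have QP: "intw ?HG m \<pi>0 (fst x) (pr x) (Q * Pm)" unfolding intw_def
        proof (intro conjI ballI)
          show "Q * Pm \<in> carrier_mat (fst x) m" using Pm(1) Qc by simp
          fix h assume "h \<in> carrier ?HG"
          then have h: "h \<in> H" by simp
          have hG: "h \<in> carrier G" using h by simp
          have p0c: "\<pi>0 h \<in> carrier_mat m m" using rep_carrier[OF irrep_rep[OF p0(2)] hG] .
          have pc: "\<pi> h \<in> carrier_mat m m" using rep_carrier[OF irrep_rep[OF P(1)] hG] mm by simp
          have rc: "pr x h \<in> carrier_mat (fst x) (fst x)" using rep_carrier[OF irrep_rep[OF rx]] h by simp
          have "Q * Pm * \<pi>0 h = Q * (Pm * \<pi>0 h)" using Pm(1) Qc p0c by simp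
          also have "\<dots> = Q * (\<pi> h * Pm)" using Pm(3) hG by simp
          also have "\<dots> = (Q * \<pi> h) * Pm" using Pm(1) Qc pc by simp
          also have "\<dots> = (pr x h * Q) * Pm" using intw_eq[OF Q(1)] h by simp
          also have "\<dots> = pr x h * (Q * Pm)" using rc Qc Pm(1) by simp
          finally show "Q * Pm * \<pi>0 h = pr x h * (Q * Pm)" .
        qed
        have QPnz: "Q * Pm \<noteq> 0\<^sub>m (fst x) m" using mult_invertible_nonzero[OF Qc Pm(1,2) Q(2)] .
        have T: "intw ?HG (fst x) (dual ?HG (pr x)) m (dual ?HG \<pi>0) (transpose_mat (Q * Pm))"
          using intw_dual[OF HG p0H irrep_rep[OF rx] QP] .
        have Tnz: "transpose_mat (Q * Pm) \<noteq> 0\<^sub>m m (fst x)"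
          using transpose_zero_iff[of "Q * Pm" "fst x" m] QPnz Qc Pm(1) by simp
        have "inj_mat (transpose_mat (Q * Pm))" using irr_inj[OF dual_irrep[OF HG rx] dp0 T Tnz] .
        then show ?thesis using T P(2) mm by blast
      qed
      define Af where "Af = (\<lambda>x. SOME A. intw ?HG (fst x) (dual ?HG (pr x)) m (dual ?HG \<pi>0) A \<and> inj_mat A)"
      have Af: "intw ?HG (fst x) (dual ?HG (pr x)) m (dual ?HG \<pi>0) (Af x) \<and> inj_mat (Af x)" if "x \<in> F" for x
        unfolding Af_def using someI_ex[OF conjunct2[OF key[OF that]]] .
      have sumle: "sum fst F \<le> m"
      proof (rule DS[where \<Gamma>="?HG" and M=m and \<psi>="dual ?HG \<pi>0" and I=F and d=fst and \<pi>="\<lambda>x. dual ?HG (pr x)" and A=Af])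
        show "group ?HG" by (rule HG)
        show "is_rep ?HG m (dual ?HG \<pi>0)" using dp0 .
        show "finite F" using fF .
        fix i assume i: "i \<in> F"
        have iT: "i \<in> Tot ?HG N" using i FS by auto
        show "is_irrep ?HG (fst i) (dual ?HG (pr i))" using dual_irrep[OF HG conjunct1[OF prI[OF iT]]] .
        show "intw ?HG (fst i) (dual ?HG (pr i)) m (dual ?HG \<pi>0) (Af i)" using Af[OF i] by simp
        show "inj_mat (Af i)" using Af[OF i] by simp
      next
        fix i j X assume i: "i \<in> F" and j: "j \<in> F" and ij: "i \<noteq> j"
          and X: "intw ?HG (fst i) (dual ?HG (pr i)) (fst j) (dual ?HG (pr j)) X"
        have iT: "i \<in> Tot ?HG N" and jT: "j \<in> Tot ?HG N" using i j FS by auto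
        show "X = 0\<^sub>m (fst j) (fst i)"
        proof (rule ccontr)
          assume nz: "X \<noteq> 0\<^sub>m (fst j) (fst i)"
          have ci: "snd i \<in> Cls ?HG (fst i)" and cj: "snd j \<in> Cls ?HG (fst j)" using iT jT unfolding Tot_def by auto
          have Xc: "X \<in> carrier_mat (fst j) (fst i)" using intw_carrier[OF X] .
          have XT: "intw ?HG (fst j) (pr j) (fst i) (pr i) (transpose_mat X)"
            using intw_undual[OF HG irrep_rep[OF conjunct1[OF prI[OF iT]]] irrep_rep[OF conjunct1[OF prI[OF jT]]] X] .
          have XTnz: "transpose_mat X \<noteq> 0\<^sub>m (fst i) (fst j)" using transpose_zero_iff[OF Xc] nz by simp
          have "fst j = fst i \<and> snd j = snd i"
            using nonzero_intw_same_cls[OF cj ci conjunct2[OF prI[OF jT]] conjunct1[OF prI[OF jT]]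
              conjunct2[OF prI[OF iT]] conjunct1[OF prI[OF iT]] XT XTnz] .
          with ij show False by (simp add: prod_eq_iff)
        qed
      qed
      have "card F * m = (\<Sum>x\<in>F. m)" by simp
      also have "\<dots> \<le> (\<Sum>x\<in>F. k * fst x)" using key by (intro sum_mono) auto
      also have "\<dots> = k * sum fst F" by (simp add: sum_distrib_left)
      also have "\<dots> \<le> k * m" using sumle by simp
      finally show "card F \<le> k" using m0 by simp
    qed
  qed
  then show ?thesis unfolding R_irr_ecard .
qed

end

lemma ln_nat_nonneg: "0 \<le> ln (real (x::nat))"
  by (cases "x = 0") auto

lemma limsup_compare:
  fixes a b :: "nat \<Rightarrow> nat" and k c :: nat
  assumes k: "k > 0" and c: "c > 0" and le: "\<And>n. b n \<le> k * a (c * n)"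
  shows "limsup (\<lambda>n. ereal (ln (real (b n)) / ln (real n))) \<le> limsup (\<lambda>n. ereal (ln (real (a n)) / ln (real n)))"
proof -
  let ?L = "limsup (\<lambda>n. ereal (ln (real (a n)) / ln (real n)))"
  show ?thesis unfolding Limsup_le_iff[of sequentially _ ?L]
  proof (intro allI impI)
    fix y assume y: "?L < y"
    obtain z where z: "?L < ereal z" "ereal z < y" using ereal_dense2[OF y] by blast
    have "eventually (\<lambda>m. ereal (ln (real (a m)) / ln (real m)) < ereal z) sequentially"
      using Limsup_lessD[OF z(1)] .
    then obtain N where N: "\<And>m. m \<ge> N \<Longrightarrow> ln (real (a m)) / ln (real m) < z"
      unfolding eventually_sequentially by auto
    have zpos: "z > 0"
    proof -
      have "ln (real (a (max N 2))) / ln (real (max N 2)) < z" using N by simp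
      moreover have "0 \<le> ln (real (a (max N 2))) / ln (real (max N 2))"
        using ln_nat_nonneg by (intro divide_nonneg_nonneg) auto
      ultimately show ?thesis by simp
    qed
    show "eventually (\<lambda>n. ereal (ln (real (b n)) / ln (real n)) < y) sequentially"
    proof (cases y)
      case PInf then show ?thesis by simp
    next
      case MInf then show ?thesis using z(2) by simp
    next
      case (real yr)
      have zy: "z < yr" using z(2) real by simp
      define K where "K = (ln (real k) + z * ln (real c)) / (yr - z) + 1"
      have lnlim: "filterlim (\<lambda>n. ln (real n)) at_top sequentially"
        using filterlim_compose[OF ln_at_top filterlim_real_sequentially] by simp
      have "eventually (\<lambda>n. K \<le> ln (real n)) sequentially"
        using lnlim unfolding filterlim_at_top by blast
      moreover have "eventually (\<lambda>n. n \<ge> max N 2) sequentially" by (rule eventually_ge_at_top)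
      ultimately have "eventually (\<lambda>n. ln (real (b n)) / ln (real n) < yr) sequentially"
      proof (rule eventually_elim2)
        fix n assume Kn: "K \<le> ln (real n)" and nN: "n \<ge> max N 2"
        have lnn: "ln (real n) > 0" using nN by simp
        show "ln (real (b n)) / ln (real n) < yr"
        proof (cases "b n = 0")
          case True then show ?thesis using zy zpos lnn by simp
        next
          case False
          have bk: "real (b n) \<le> real k * real (a (c * n))" using le[of n] by (metis of_nat_le_iff of_nat_mult)
          have a0: "a (c * n) > 0" using False le[of n] by (cases "a (c * n)") auto
          have ncn: "n \<le> c * n" using c by simp
          have cn1: "N \<le> c * n" by (rule le_trans[OF _ ncn]) (use nN in simp)
          have cn2: "2 \<le> c * n" by (rule le_trans[OF _ ncn]) (use nN in simp)
          note cn = cn1 cn2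
          have "real (c * n) > 1" using cn2 by linarith
          hence lncn: "ln (real (c * n)) > 0" by (rule ln_gt_zero)
          have "ln (real (a (c * n))) / ln (real (c * n)) < z" using N[OF cn(1)] .
          hence la: "ln (real (a (c * n))) < z * ln (real (c * n))" using lncn by (simp add: divide_less_eq)
          have "ln (real (b n)) \<le> ln (real k * real (a (c * n)))"
            using bk False by (subst ln_le_cancel_iff) auto
          also have "\<dots> = ln (real k) + ln (real (a (c * n)))" using k a0 by (simp add: ln_mult)
          also have "\<dots> < ln (real k) + z * ln (real (c * n))" using la by simp
          also have "\<dots> = ln (real k) + z * ln (real c) + z * ln (real n)"
            using c nN by (simp add: ln_mult distrib_left)
          also have "\<dots> \<le> (yr - z) * ln (real n) + z * ln (real n)"
          proof -
            have "(ln (real k) + z * ln (real c)) / (yr - z) \<le> ln (real n)" using Kn unfolding K_def by simp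
            hence "ln (real k) + z * ln (real c) \<le> (yr - z) * ln (real n)" using zy by (simp add: divide_le_eq mult.commute)
            then show ?thesis by simp
          qed
          also have "\<dots> = yr * ln (real n)" by (simp add: algebra_simps)
          finally show ?thesis using lnn by (simp add: divide_less_eq)
        qed
      qed
      then show ?thesis using real by (auto elim: eventually_mono)
    qed
  qed
qed


lemma (in group) fi_exists:
  assumes sub: "subgroup H G" and fin: "finite (rcosets H)"
  shows "\<exists>k t i0. fi G H k t i0"
proof -
  have grp: "group G" by (rule is_group)
  let ?R = "rcosets H"
  define k where "k = card ?R"
  obtain f where f: "bij_betw f {0..<k} ?R" using ex_bij_betw_nat_finite[OF fin] unfolding k_def by blast
  have Hc: "H \<subseteq> carrier G" using subgroup.subset[OF sub] .
  define t where "t = (\<lambda>i. if f i = H then \<one> else (SOME a. a \<in> carrier G \<and> f i = H #> a))"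
  have t: "t i \<in> carrier G \<and> f i = H #> t i" if i: "i < k" for i
  proof (cases "f i = H")
    case True
    then show ?thesis unfolding t_def using coset_mult_one[OF Hc] by simp
  next
    case False
    have "f i \<in> ?R" using f i unfolding bij_betw_def by auto
    then have "\<exists>a. a \<in> carrier G \<and> f i = H #> a" unfolding RCOSETS_def by auto
    from someI_ex[OF this] show ?thesis unfolding t_def using False by simp
  qed
  have HR: "H \<in> ?R" using rcosetsI[OF Hc one_closed] coset_mult_one[OF Hc] by simp
  then have "H \<in> f ` {0..<k}" using f unfolding bij_betw_def by simp
  then obtain i0 where i0': "i0 \<in> {0..<k}" "H = f i0" by (rule imageE)
  then have i0: "i0 < k" "f i0 = H" by auto
  have ti0: "t i0 = \<one>" unfolding t_def using i0 by simp
  have cov: "\<exists>!j. j < k \<and> g \<otimes> inv (t j) \<in> H" if g: "g \<in> carrier G" for g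
  proof -
    have "H #> g \<in> ?R" using rcosetsI[OF Hc g] .
    then have "H #> g \<in> f ` {0..<k}" using f unfolding bij_betw_def by simp
    then obtain j where j': "j \<in> {0..<k}" "H #> g = f j" by (rule imageE)
    then have j: "j < k" "f j = H #> g" by auto
    have "g \<in> H #> t j" using rcos_self[OF g sub] j t[OF j(1)] by simp
    then have gj: "g \<otimes> inv (t j) \<in> H" using subgroup.rcos_module_imp[OF sub grp conjunct1[OF t[OF j(1)]]] by simp
    show ?thesis
    proof (rule ex1I[of _ j])
      show "j < k \<and> g \<otimes> inv (t j) \<in> H" using j gj by simp
      fix j' assume j': "j' < k \<and> g \<otimes> inv (t j') \<in> H"
      have tj': "t j' \<in> carrier G" using t j' by simp
      have "g \<in> H #> t j'" using subgroup.rcos_module_rev[OF sub grp tj' g] j' by simp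
      then have "H #> t j' = H #> g" using repr_independence[OF _ tj' sub] by simp
      then have "f j' = f j" using t j' j by simp
      then show "j' = j" using f j j' unfolding bij_betw_def inj_on_def by auto
    qed
  qed
  have "fi G H k t i0"
    unfolding fi_def fi_axioms_def
    using grp sub t i0 ti0 cov by auto
  then show ?thesis by blast
qed

theorem corollary4p5:
  fixes G :: "('g, 'b) monoid_scheme" and H :: "'g set"
  assumes "group G" and "fin_gen_group G"
    and "subgroup H G" and "finite (rcosets\<^bsub>G\<^esub> H)"
  shows "rep_growth (G\<lparr>carrier := H\<rparr>) = rep_growth G"
proof -
  obtain k t i0 where "fi G H k t i0" using group.fi_exists[OF assms(1,3,4)] by blast
  then interpret F: fi G H k t i0 .
  let ?HG = "G\<lparr>carrier := H\<rparr>"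
  have d1: "R_irr G n \<le> enat k * R_irr ?HG n" for n by (rule F.dir1)
  have d2: "R_irr ?HG n \<le> enat k * R_irr G (k * n)" for n by (rule F.dir2)
  have kp: "k > 0" by (rule F.k_pos)
  have iff: "(\<exists>n. R_irr ?HG n = \<infinity>) \<longleftrightarrow> (\<exists>n. R_irr G n = \<infinity>)"
  proof
    assume "\<exists>n. R_irr ?HG n = \<infinity>"
    then obtain n where n: "R_irr ?HG n = \<infinity>" by blast
    then have "enat k * R_irr G (k * n) = \<infinity>" using d2[of n] by simp
    then have "R_irr G (k * n) = \<infinity>" by (cases "R_irr G (k * n)") auto
    then show "\<exists>n. R_irr G n = \<infinity>" by blast
  next
    assume "\<exists>n. R_irr G n = \<infinity>"
    then obtain n where n: "R_irr G n = \<infinity>" by blast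
    then have "enat k * R_irr ?HG n = \<infinity>" using d1[of n] by simp
    then have "R_irr ?HG n = \<infinity>" by (cases "R_irr ?HG n") auto
    then show "\<exists>n. R_irr ?HG n = \<infinity>" by blast
  qed
  show ?thesis
  proof (cases "\<exists>n. R_irr G n = \<infinity>")
    case True
    then show ?thesis unfolding rep_growth_def using iff by simp
  next
    case False
    have False': "\<not> (\<exists>n. R_irr ?HG n = \<infinity>)" using False iff by simp
    define a where "a = (\<lambda>n. the_enat (R_irr G n))"
    define b where "b = (\<lambda>n. the_enat (R_irr ?HG n))"
    have ae: "R_irr G n = enat (a n)" for n
    proof -
      have "R_irr G n \<noteq> \<infinity>" using False by auto
      then show ?thesis unfolding a_def by (cases "R_irr G n") auto
    qed
    have be: "R_irr ?HG n = enat (b n)" for n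
    proof -
      have "R_irr ?HG n \<noteq> \<infinity>" using False' by auto
      then show ?thesis unfolding b_def by (cases "R_irr ?HG n") auto
    qed
    have ab: "a n \<le> k * b (1 * n)" for n using d1[of n] unfolding ae be by simp
    have ba: "b n \<le> k * a (k * n)" for n using d2[of n] unfolding ae be by simp
    have "rep_growth G = limsup (\<lambda>n. ereal (ln (real (a n)) / ln (real n)))"
      unfolding rep_growth_def a_def by (rule if_not_P[OF False])
    moreover have "rep_growth ?HG = limsup (\<lambda>n. ereal (ln (real (b n)) / ln (real n)))"
      unfolding rep_growth_def b_def by (rule if_not_P[OF False'])
    moreover have "limsup (\<lambda>n. ereal (ln (real (a n)) / ln (real n))) \<le> limsup (\<lambda>n. ereal (ln (real (b n)) / ln (real n)))"
      by (rule limsup_compare[where k=k and c=1 and a=b and b=a, OF kp _ ab]) simp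
    moreover have "limsup (\<lambda>n. ereal (ln (real (b n)) / ln (real n))) \<le> limsup (\<lambda>n. ereal (ln (real (a n)) / ln (real n)))"
      by (rule limsup_compare[where k=k and c=k and a=a and b=b, OF kp kp ba])
    ultimately show ?thesis by simp
  qed
qed

end
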